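(* Let $k\ge 3$, $n_1,\dots,n_k\ge 2$, let $j\in[k]$ be an index with $n_j=\min\{n_1,\dots,n_k\}$, and let $f(k,n_j)=(n_j-1)(k-1)+\tfrac{(n_j-2)(n_j-1)}{2}-\tfrac{(k-2)(k-1)}{2}$. Let $G\in\mathcal{O}(K_{n_1,\dots,n_k})$ have the minimum number of edges among graphs in this orbit. Then: (1) If $k$ is even and $f(k,n_j)>0$, then $G=\Gamma(\text{complete};\ t_i=\mathrm{ss}\ \forall i)$ (a multi-leaf repeater graph), and $|E(G)|=\tfrac{k(k-1)}{2}+\sum_{i=1}^k(n_i-1)$. (2) If $k$ is even and $f(k,n_j)<0$, then $G=\Gamma(\text{star toward }j;\ t_j=\mathrm{c},\ t_i=\mathrm{ss}\ \forall i\ne j)$, and $|E(G)|=n_j(k-1)+\tfrac{n_j(n_j-1)}{2}+\sum_{i\ne j}(n_i-1)$. If $f(k,n_j)=0$, the graphs of cases (1) and (2) have the same number of edges and both are minimal in the orbit. (3) If $k$ is odd, then $G=\Gamma(\text{star toward }j;\ t_j=\mathrm{sc},\ t_i=\mathrm{ss}\ \forall i\ne j)$, and $|E(G)|=n_j(k-1)+\sum_{i\ne j}(n_i-1)$.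
   Context: $V=U_1\sqcup\cdots\sqcup U_k$ with $|U_i|=n_i$; $K_{n_1,\dots,n_k}$ has edges exactly between different parts. The local complement $c_v(G)$ complements the edges among the neighbours of $v$; $\mathcal{O}(G)$ is the set of graphs on $V$ obtainable from $G$ by finite sequences of local complements. Graph family $\Gamma$: assign to each $i\in[k]$ a type $t_i\in\{\mathrm{c},\mathrm{sc},\mathrm{ss}\}$: if $t_i=\mathrm{c}$, $U_i$ is a clique and $R_i=U_i$; if $t_i=\mathrm{sc}$, $U_i$ is an independent set and $R_i=U_i$; if $t_i=\mathrm{ss}$, a chosen center $c_i\in U_i$ is adjacent to all other vertices of $U_i$, $U_i$ has no other internal edges, and $R_i=\{c_i\}$. Additionally choose a central type: "complete" means that for all $i\ne l$ every vertex of $R_i$ is adjacent to every vertex of $R_l$; "star toward $j$" means that for each $i\ne j$ every vertex of $R_i$ is adjacent to every vertex of $R_j$, with no other edges between different parts. $\Gamma(\cdot)$ denotes the resulting graph (for some choice of centers). *)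

theory Defs
  imports Complex_Main
begin

text \<open>Simple graphs on a vertex type 'a are represented by their edge sets:
  sets of two-element sets {x, y} with x \<noteq> y.\<close>

definition nbhd :: "'a set set \<Rightarrow> 'a \<Rightarrow> 'a set" where
  "nbhd E v = {u. u \<noteq> v \<and> {u, v} \<in> E}"

definition pairs_in :: "'a set \<Rightarrow> 'a set set" where
  "pairs_in S = {{x, y} | x y. x \<in> S \<and> y \<in> S \<and> x \<noteq> y}"

definition local_comp :: "'a set set \<Rightarrow> 'a \<Rightarrow> 'a set set" where
  "local_comp E v = (E - pairs_in (nbhd E v)) \<union> (pairs_in (nbhd E v) - E)"

inductive_set lc_orbit :: "'a set \<Rightarrow> 'a set set \<Rightarrow> 'a set set set"
  for V :: "'a set" and E :: "'a set set" where
  base: "E \<in> lc_orbit V E"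
| step: "H \<in> lc_orbit V E \<Longrightarrow> v \<in> V \<Longrightarrow> local_comp H v \<in> lc_orbit V E"

definition complete_multipartite :: "nat \<Rightarrow> (nat \<Rightarrow> 'a set) \<Rightarrow> 'a set set" where
  "complete_multipartite k U =
     {{x, y} | x y i l. i \<in> {1..k} \<and> l \<in> {1..k} \<and> i \<noteq> l \<and> x \<in> U i \<and> y \<in> U l}"

datatype part_type = PC | PSC | PSS

datatype central_type = Complete | StarToward nat

definition rep_set :: "(nat \<Rightarrow> part_type) \<Rightarrow> (nat \<Rightarrow> 'a) \<Rightarrow> (nat \<Rightarrow> 'a set) \<Rightarrow> nat \<Rightarrow> 'a set" where
  "rep_set t c U i = (if t i = PSS then {c i} else U i)"

definition intra_edges :: "(nat \<Rightarrow> part_type) \<Rightarrow> (nat \<Rightarrow> 'a) \<Rightarrow> (nat \<Rightarrow> 'a set) \<Rightarrow> nat \<Rightarrow> 'a set set" where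
  "intra_edges t c U i =
     (case t i of
        PC \<Rightarrow> pairs_in (U i)
      | PSC \<Rightarrow> {}
      | PSS \<Rightarrow> {{c i, u} | u. u \<in> U i \<and> u \<noteq> c i})"

definition inter_edges :: "nat \<Rightarrow> central_type \<Rightarrow> (nat \<Rightarrow> part_type) \<Rightarrow> (nat \<Rightarrow> 'a) \<Rightarrow> (nat \<Rightarrow> 'a set) \<Rightarrow> 'a set set" where
  "inter_edges k ct t c U =
     (case ct of
        Complete \<Rightarrow> {{x, y} | x y i l. i \<in> {1..k} \<and> l \<in> {1..k} \<and> i \<noteq> l \<and>
                                    x \<in> rep_set t c U i \<and> y \<in> rep_set t c U l}
      | StarToward j \<Rightarrow> {{x, y} | x y i. i \<in> {1..k} \<and> i \<noteq> j \<and>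
                                    x \<in> rep_set t c U i \<and> y \<in> rep_set t c U j})"

text \<open>The graph Gamma(central type; part types t) with centers c (c i \<in> U i is only
  relevant for parts of type ss).\<close>
definition Gamma :: "nat \<Rightarrow> (nat \<Rightarrow> 'a set) \<Rightarrow> central_type \<Rightarrow> (nat \<Rightarrow> part_type) \<Rightarrow> (nat \<Rightarrow> 'a) \<Rightarrow> 'a set set" where
  "Gamma k U ct t c = (\<Union>i\<in>{1..k}. intra_edges t c U i) \<union> inter_edges k ct t c U"

definition valid_centers :: "nat \<Rightarrow> (nat \<Rightarrow> 'a set) \<Rightarrow> (nat \<Rightarrow> 'a) \<Rightarrow> bool" where
  "valid_centers k U c = (\<forall>i\<in>{1..k}. c i \<in> U i)"

definition f_val :: "nat \<Rightarrow> nat \<Rightarrow> real" where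
  "f_val k m = (real m - 1) * (real k - 1) + (real m - 2) * (real m - 1) / 2
               - (real k - 2) * (real k - 1) / 2"

definition Gamma1 :: "nat \<Rightarrow> (nat \<Rightarrow> 'a set) \<Rightarrow> (nat \<Rightarrow> 'a) \<Rightarrow> 'a set set" where
  "Gamma1 k U c = Gamma k U Complete (\<lambda>i. PSS) c"

definition Gamma2 :: "nat \<Rightarrow> (nat \<Rightarrow> 'a set) \<Rightarrow> nat \<Rightarrow> (nat \<Rightarrow> 'a) \<Rightarrow> 'a set set" where
  "Gamma2 k U j c = Gamma k U (StarToward j) (\<lambda>i. if i = j then PC else PSS) c"

definition Gamma3 :: "nat \<Rightarrow> (nat \<Rightarrow> 'a set) \<Rightarrow> nat \<Rightarrow> (nat \<Rightarrow> 'a) \<Rightarrow> 'a set set" where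
  "Gamma3 k U j c = Gamma k U (StarToward j) (\<lambda>i. if i = j then PSC else PSS) c"

end

theory Submission
  imports Defs
begin

definition gr :: "'a set \<Rightarrow> ('a \<Rightarrow> 'a \<Rightarrow> bool) \<Rightarrow> 'a set set" where
  "gr V P = {{x, y} | x y. x \<in> V \<and> y \<in> V \<and> x \<noteq> y \<and> P x y}"

definition symp2 :: "('a \<Rightarrow> 'a \<Rightarrow> bool) \<Rightarrow> bool" where
  "symp2 P = (\<forall>x y. P x y = P y x)"

lemma doubleton_eq: "{a, b} = {x, y} \<longleftrightarrow> (a = x \<and> b = y) \<or> (a = y \<and> b = x)"
  by (auto simp: doubleton_eq_iff)

lemma mem_gr: "symp2 P \<Longrightarrow> {a, b} \<in> gr V P \<longleftrightarrow> a \<in> V \<and> b \<in> V \<and> a \<noteq> b \<and> P a b"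
  unfolding gr_def symp2_def by (auto simp: doubleton_eq_iff)

lemma grI: "x \<in> V \<Longrightarrow> y \<in> V \<Longrightarrow> x \<noteq> y \<Longrightarrow> P x y \<Longrightarrow> {x, y} \<in> gr V P"
  unfolding gr_def by blast

lemma gr_cong: "(\<And>x y. x \<in> V \<Longrightarrow> y \<in> V \<Longrightarrow> x \<noteq> y \<Longrightarrow> P x y = Q x y) \<Longrightarrow> gr V P = gr V Q"
  unfolding gr_def by blast

lemma nbhd_gr: assumes "symp2 P" "v \<in> V" shows "nbhd (gr V P) v = {u \<in> V. u \<noteq> v \<and> P v u}"
proof -
  have "{u, v} \<in> gr V P \<longleftrightarrow> u \<in> V \<and> u \<noteq> v \<and> P v u" for u
    using mem_gr[OF assms(1), of u v V] assms unfolding symp2_def by blast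
  then show ?thesis unfolding nbhd_def by blast
qed

lemma pairs_in_mem: "{a, b} \<in> pairs_in S \<longleftrightarrow> a \<in> S \<and> b \<in> S \<and> a \<noteq> b"
  unfolding pairs_in_def by (auto simp: doubleton_eq_iff)

lemma local_comp_gr:
  assumes s: "symp2 P" and v: "v \<in> V"
  shows "local_comp (gr V P) v = gr V (\<lambda>x y. P x y \<noteq> (x \<noteq> v \<and> y \<noteq> v \<and> P v x \<and> P v y))"
    (is "?L = gr V ?Q")
proof -
  have N: "nbhd (gr V P) v = {u \<in> V. u \<noteq> v \<and> P v u}" using nbhd_gr[OF s v] .
  have sQ: "symp2 ?Q" using s unfolding symp2_def by metis
  have sub1: "?L \<subseteq> gr V P \<union> pairs_in V"
    unfolding local_comp_def N pairs_in_def by blast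
  have sub2: "gr V P \<union> pairs_in V \<subseteq> {{x, y} | x y. x \<in> V \<and> y \<in> V \<and> x \<noteq> y}"
    unfolding gr_def pairs_in_def by blast
  have sub3: "gr V ?Q \<subseteq> {{x, y} | x y. x \<in> V \<and> y \<in> V \<and> x \<noteq> y}"
    unfolding gr_def by blast
  have key: "{x, y} \<in> ?L \<longleftrightarrow> {x, y} \<in> gr V ?Q" if "x \<in> V" "y \<in> V" "x \<noteq> y" for x y
  proof -
    have "{x, y} \<in> ?L \<longleftrightarrow> ({x, y} \<in> gr V P) \<noteq> ({x, y} \<in> pairs_in {u \<in> V. u \<noteq> v \<and> P v u})"
      unfolding local_comp_def N by blast
    also have "\<dots> \<longleftrightarrow> ?Q x y"
      unfolding mem_gr[OF s] pairs_in_mem using that by auto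
    also have "\<dots> \<longleftrightarrow> {x, y} \<in> gr V ?Q"
      unfolding mem_gr[OF sQ] using that by auto
    finally show ?thesis .
  qed
  show ?thesis
  proof (rule set_eqI)
    fix e
    show "e \<in> ?L \<longleftrightarrow> e \<in> gr V ?Q"
    proof
      assume "e \<in> ?L"
      then obtain x y where "e = {x, y}" "x \<in> V" "y \<in> V" "x \<noteq> y" using sub1 sub2 by blast
      then show "e \<in> gr V ?Q" using key \<open>e \<in> ?L\<close> by blast
    next
      assume "e \<in> gr V ?Q"
      then obtain x y where "e = {x, y}" "x \<in> V" "y \<in> V" "x \<noteq> y" using sub3 by blast
      then show "e \<in> ?L" using key \<open>e \<in> gr V ?Q\<close> by blast
    qed
  qed
qed

fun hadj :: "central_type \<Rightarrow> nat \<Rightarrow> nat \<Rightarrow> bool" where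
  "hadj Complete i l = True"
| "hadj (StarToward j) i l = (i = j \<or> l = j)"

locale mp =
  fixes k :: nat and U :: "nat \<Rightarrow> 'a set" and V :: "'a set"
  assumes fin: "\<And>i. i \<in> {1..k} \<Longrightarrow> finite (U i)"
    and two: "\<And>i. i \<in> {1..k} \<Longrightarrow> card (U i) \<ge> 2"
    and disj: "\<And>i l. i \<in> {1..k} \<Longrightarrow> l \<in> {1..k} \<Longrightarrow> i \<noteq> l \<Longrightarrow> U i \<inter> U l = {}"
    and V_def: "V = (\<Union>i\<in>{1..k}. U i)"
begin

definition pid :: "'a \<Rightarrow> nat" where
  "pid x = (THE i. i \<in> {1..k} \<and> x \<in> U i)"

lemma pid: "i \<in> {1..k} \<Longrightarrow> x \<in> U i \<Longrightarrow> pid x = i"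
  unfolding pid_def using disj by (rule_tac the_equality) blast+

lemma pidV: "x \<in> V \<Longrightarrow> pid x \<in> {1..k} \<and> x \<in> U (pid x)"
  using pid V_def by auto

lemma pidV1: "x \<in> V \<Longrightarrow> 1 \<le> pid x" and pidV2: "x \<in> V \<Longrightarrow> pid x \<le> k"
  and pidV3: "x \<in> V \<Longrightarrow> x \<in> U (pid x)"
  using pidV by auto

lemma inV: "i \<in> {1..k} \<Longrightarrow> x \<in> U i \<Longrightarrow> x \<in> V"
  using V_def by auto

definition valid :: "(nat \<Rightarrow> 'a) \<Rightarrow> bool" where
  "valid c = (\<forall>i\<in>{1..k}. c i \<in> U i)"

definition isrep :: "(nat \<Rightarrow> part_type) \<Rightarrow> (nat \<Rightarrow> 'a) \<Rightarrow> 'a \<Rightarrow> bool" where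
  "isrep ty c x = (ty (pid x) = PSS \<longrightarrow> x = c (pid x))"

definition adjS :: "central_type \<Rightarrow> (nat \<Rightarrow> part_type) \<Rightarrow> (nat \<Rightarrow> 'a) \<Rightarrow> 'a \<Rightarrow> 'a \<Rightarrow> bool" where
  "adjS ct ty c x y = (if pid x = pid y
      then (ty (pid x) = PC \<or> (ty (pid x) = PSS \<and> (x = c (pid x) \<or> y = c (pid x))))
      else (isrep ty c x \<and> isrep ty c y \<and> hadj ct (pid x) (pid y)))"

lemma hadj_sym: "hadj ct i l = hadj ct l i"
  by (cases ct) auto

lemma adjS_sym: "symp2 (adjS ct ty c)"
  unfolding symp2_def adjS_def using hadj_sym by auto

definition ctok :: "central_type \<Rightarrow> bool" where
  "ctok ct = (case ct of Complete \<Rightarrow> True | StarToward j \<Rightarrow> j \<in> {1..k})"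

lemma Gamma_eq:
  assumes c: "valid c" and ct: "ctok ct"
  shows "Gamma k U ct ty c = gr V (adjS ct ty c)"
proof (rule set_eqI, rule iffI)
  have cU: "i \<in> {1..k} \<Longrightarrow> c i \<in> U i" for i using c unfolding valid_def by blast
  have rep: "x \<in> rep_set ty c U i \<longleftrightarrow> x \<in> U i \<and> isrep ty c x" if "i \<in> {1..k}" for i x
    using that cU pid unfolding rep_set_def isrep_def by auto
  fix e assume "e \<in> Gamma k U ct ty c"
  then consider (intra) i where "i \<in> {1..k}" "e \<in> intra_edges ty c U i"
    | (inter) "e \<in> inter_edges k ct ty c U"
    unfolding Gamma_def by blast
  then show "e \<in> gr V (adjS ct ty c)"
  proof cases
    case intra
    show ?thesis
    proof (cases "ty i")
      case PC
      then obtain x y where h: "e = {x, y}" "x \<in> U i" "y \<in> U i" "x \<noteq> y"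
        using intra unfolding intra_edges_def pairs_in_def by auto
      have "adjS ct ty c x y" unfolding adjS_def using pid[OF intra(1)] h PC by simp
      then show ?thesis unfolding h(1) using grI inV[OF intra(1)] h by metis
    next
      case PSC
      then show ?thesis using intra unfolding intra_edges_def by auto
    next
      case PSS
      then obtain u where h: "e = {c i, u}" "u \<in> U i" "u \<noteq> c i"
        using intra unfolding intra_edges_def by auto
      have "adjS ct ty c (c i) u" unfolding adjS_def using pid[OF intra(1)] h PSS cU[OF intra(1)] by simp
      then show ?thesis unfolding h(1) using grI inV[OF intra(1)] h cU[OF intra(1)] by metis
    qed
  next
    case inter
    show ?thesis
    proof (cases ct)
      case Complete
      then obtain x y i l where h: "e = {x, y}" "i \<in> {1..k}" "l \<in> {1..k}" "i \<noteq> l"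
        "x \<in> rep_set ty c U i" "y \<in> rep_set ty c U l"
        using inter unfolding inter_edges_def by auto
      then have h2: "x \<in> U i" "y \<in> U l" "isrep ty c x" "isrep ty c y" using rep by auto
      have "pid x = i" "pid y = l" using h h2 pid by auto
      then have "adjS ct ty c x y" "x \<noteq> y" unfolding adjS_def using h h2 Complete by auto
      then show ?thesis unfolding h(1) using grI inV h h2 by metis
    next
      case (StarToward j)
      then have j: "j \<in> {1..k}" using ct unfolding ctok_def by auto
      obtain x y i where h: "e = {x, y}" "i \<in> {1..k}" "i \<noteq> j"
        "x \<in> rep_set ty c U i" "y \<in> rep_set ty c U j"
        using inter StarToward unfolding inter_edges_def by auto
      then have h2: "x \<in> U i" "y \<in> U j" "isrep ty c x" "isrep ty c y" using rep j by auto
      have "pid x = i" "pid y = j" using h2 pid h j by auto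
      then have "adjS ct ty c x y" "x \<noteq> y" unfolding adjS_def using h h2 StarToward by auto
      then show ?thesis unfolding h(1) using grI inV h h2 j by metis
    qed
  qed
next
  have cU: "i \<in> {1..k} \<Longrightarrow> c i \<in> U i" for i using c unfolding valid_def by blast
  have rep: "x \<in> rep_set ty c U i \<longleftrightarrow> x \<in> U i \<and> isrep ty c x" if "i \<in> {1..k}" for i x
    using that cU pid unfolding rep_set_def isrep_def by auto
  fix e assume "e \<in> gr V (adjS ct ty c)"
  then obtain x y where h: "e = {x, y}" "x \<in> V" "y \<in> V" "x \<noteq> y" "adjS ct ty c x y"
    unfolding gr_def by blast
  define i where "i = pid x"
  define l where "l = pid y"
  have i: "i \<in> {1..k}" "x \<in> U i" and l: "l \<in> {1..k}" "y \<in> U l"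
    using pidV h unfolding i_def l_def by auto
  show "e \<in> Gamma k U ct ty c"
  proof (cases "i = l")
    case True
    then have a: "ty i = PC \<or> (ty i = PSS \<and> (x = c i \<or> y = c i))"
      using h(5) unfolding adjS_def i_def l_def by auto
    have "e \<in> intra_edges ty c U i"
    proof (cases "ty i")
      case PC
      then show ?thesis unfolding intra_edges_def pairs_in_def using h i l True by auto
    next
      case PSC
      then show ?thesis using a by auto
    next
      case PSS
      then have xy: "x = c i \<or> y = c i" using a by auto
      have "{x, y} \<in> {{c i, u} |u. u \<in> U i \<and> u \<noteq> c i}"
        using xy
      proof
        assume "x = c i" then show ?thesis using h l True by blast
      next
        assume "y = c i" then have "{x, y} = {c i, x}" by (simp add: insert_commute)
        then show ?thesis using \<open>y = c i\<close> h i by blast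
      qed
      then show ?thesis unfolding intra_edges_def using PSS h(1) by simp
    qed
    then show ?thesis unfolding Gamma_def using i by blast
  next
    case False
    then have a: "isrep ty c x" "isrep ty c y" "hadj ct i l"
      using h(5) unfolding adjS_def i_def l_def by auto
    have rx: "x \<in> rep_set ty c U i" and ry: "y \<in> rep_set ty c U l" using rep i l a by auto
    have "e \<in> inter_edges k ct ty c U"
    proof (cases ct)
      case Complete
      then show ?thesis unfolding inter_edges_def using h(1) i l False rx ry by auto
    next
      case (StarToward j)
      then have "i = j \<or> l = j" using a by auto
      then show ?thesis
      proof
        assume "l = j" then show ?thesis unfolding inter_edges_def using StarToward h(1) i l False rx ry
          by auto
      next
        assume "i = j" 
        have "e = {y, x}" using h(1) by (simp add: insert_commute)
        then show ?thesis unfolding inter_edges_def using StarToward \<open>i = j\<close> i l False rx ry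
          by auto
      qed
    qed
    then show ?thesis unfolding Gamma_def by blast
  qed
qed

lemma K_eq: "complete_multipartite k U = gr V (adjS Complete (\<lambda>_. PSC) c)"
proof -
  have "complete_multipartite k U = gr V (\<lambda>x y. pid x \<noteq> pid y)"
    unfolding complete_multipartite_def gr_def
  proof (rule Collect_cong, rule iffI)
    fix e assume "\<exists>x y i l. e = {x, y} \<and> i \<in> {1..k} \<and> l \<in> {1..k} \<and> i \<noteq> l \<and> x \<in> U i \<and> y \<in> U l"
    then obtain x y i l where h: "e = {x, y}" "i \<in> {1..k}" "l \<in> {1..k}" "i \<noteq> l" "x \<in> U i" "y \<in> U l" by blast
    have "pid x = i" "pid y = l" using pid h by auto
    then show "\<exists>x y. e = {x, y} \<and> x \<in> V \<and> y \<in> V \<and> x \<noteq> y \<and> pid x \<noteq> pid y"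
      using h inV by metis
  next
    fix e assume "\<exists>x y. e = {x, y} \<and> x \<in> V \<and> y \<in> V \<and> x \<noteq> y \<and> pid x \<noteq> pid y"
    then obtain x y where h: "e = {x, y}" "x \<in> V" "y \<in> V" "pid x \<noteq> pid y" by blast
    show "\<exists>x y i l. e = {x, y} \<and> i \<in> {1..k} \<and> l \<in> {1..k} \<and> i \<noteq> l \<and> x \<in> U i \<and> y \<in> U l"
      using h pidV by blast
  qed
  also have "\<dots> = gr V (adjS Complete (\<lambda>_. PSC) c)"
    by (rule gr_cong) (auto simp: adjS_def isrep_def)
  finally show ?thesis .
qed

end

context mp begin

lemma pid_c: "valid c \<Longrightarrow> p \<in> {1..k} \<Longrightarrow> pid (c p) = p"
  unfolding valid_def using pid by blast

lemma pt3: "t = PC \<or> t = PSC \<or> t = PSS"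
  by (cases t) auto

lemma LC_adjS: "v \<in> V \<Longrightarrow> local_comp (gr V (adjS ct ty c)) v =
   gr V (\<lambda>x y. adjS ct ty c x y \<noteq> (x \<noteq> v \<and> y \<noteq> v \<and> adjS ct ty c v x \<and> adjS ct ty c v y))"
  using local_comp_gr[OF adjS_sym] by blast

lemma T1:
  assumes c: "valid c" and v: "v \<in> V" and p: "ty (pid v) = PSC"
    and noPC: "\<forall>i\<in>{1..k}. ty i \<noteq> PC"
  shows "local_comp (gr V (adjS Complete ty c)) v =
     gr V (adjS (StarToward (pid v)) (\<lambda>i. if i = pid v then PSC else if ty i = PSC then PC else PSS) c)"
  unfolding LC_adjS[OF v]
proof (rule gr_cong)
  fix x y assume x: "x \<in> V" and y: "y \<in> V" and xy: "x \<noteq> y"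
  have px: "pid x \<in> {1..k}" and py: "pid y \<in> {1..k}" and pv: "pid v \<in> {1..k}" using pidV x y v by auto
  have cx: "pid (c (pid x)) = pid x" and cy: "pid (c (pid y)) = pid y" and cv: "pid (c (pid v)) = pid v"
    using pid_c[OF c] px py pv by auto
  have tx: "ty (pid x) \<noteq> PC" "ty (pid y) \<noteq> PC" using noPC px py by auto
  show "(adjS Complete ty c x y \<noteq> (x \<noteq> v \<and> y \<noteq> v \<and> adjS Complete ty c v x \<and> adjS Complete ty c v y)) =
         adjS (StarToward (pid v)) (\<lambda>i. if i = pid v then PSC else if ty i = PSC then PC else PSS) c x y"
    unfolding adjS_def isrep_def using p tx xy cx cy cv
    by (cases "ty (pid x)"; cases "ty (pid y)"; auto)
qed

lemma T0:
  assumes c: "valid c" and v: "v \<in> V" and p: "ty (pid v) = PSS" and nc: "v \<noteq> c (pid v)"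
  shows "local_comp (gr V (adjS (ct) (ty) (c))) v = gr V (adjS (ct) (ty) (c))"
  unfolding LC_adjS[OF v]
proof (rule gr_cong)
  fix x y assume x: "x \<in> V" and y: "y \<in> V" and xy: "x \<noteq> y"
  have px: "pid x \<in> {1..k}" and py: "pid y \<in> {1..k}" and pv: "pid v \<in> {1..k}" using pidV x y v by auto
  have cx: "pid (c (pid x)) = pid x" and cy: "pid (c (pid y)) = pid y" and cv: "pid (c (pid v)) = pid v"
    using pid_c[OF c] px py pv by auto
  have vv: "pid v = pid v" by simp
  
  show "(adjS (ct) (ty) (c) x y \<noteq> (x \<noteq> v \<and> y \<noteq> v \<and> adjS (ct) (ty) (c) v x \<and> adjS (ct) (ty) (c) v y)) =
         adjS (ct) (ty) (c) x y"
    unfolding adjS_def isrep_def hadj.simps fun_upd_def using assms xy cx cy cv px py pv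
    by (smt (verit) part_type.distinct pt3[of "ty (pid x)"] pt3[of "ty (pid y)"] pt3[of "ty (pid v)"])
qed

lemma T2:
  assumes c: "valid c" and v: "v \<in> V" and p: "ty (pid v) = PSS" and vc: "v = c (pid v)" and noPC: "\<forall>i\<in>{1..k}. ty i \<noteq> PC"
  shows "local_comp (gr V (adjS (Complete) (ty) (c))) v = gr V (adjS (StarToward (pid v)) (\<lambda>i. if i = pid v then PC else if ty i = PSC then PC else PSS) (c))"
  unfolding LC_adjS[OF v]
proof (rule gr_cong)
  fix x y assume x: "x \<in> V" and y: "y \<in> V" and xy: "x \<noteq> y"
  have px: "pid x \<in> {1..k}" and py: "pid y \<in> {1..k}" and pv: "pid v \<in> {1..k}" using pidV x y v by auto
  have cx: "pid (c (pid x)) = pid x" and cy: "pid (c (pid y)) = pid y" and cv: "pid (c (pid v)) = pid v"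
    using pid_c[OF c] px py pv by auto
  have n1: "ty (pid x) \<noteq> PC" "ty (pid y) \<noteq> PC" "ty (pid v) \<noteq> PC" using noPC px py pv by auto
  
  show "(adjS (Complete) (ty) (c) x y \<noteq> (x \<noteq> v \<and> y \<noteq> v \<and> adjS (Complete) (ty) (c) v x \<and> adjS (Complete) (ty) (c) v y)) =
         adjS (StarToward (pid v)) (\<lambda>i. if i = pid v then PC else if ty i = PSC then PC else PSS) (c) x y"
    unfolding adjS_def isrep_def hadj.simps fun_upd_def using assms n1 xy cx cy cv px py pv
    by (smt (verit) part_type.distinct pt3[of "ty (pid x)"] pt3[of "ty (pid y)"] pt3[of "ty (pid v)"])
qed

lemma T3:
  assumes c: "valid c" and v: "v \<in> V" and j: "pid v = j" and tj: "ty j = PC" and noSC: "\<forall>i\<in>{1..k}. i \<noteq> j \<longrightarrow> ty i \<noteq> PSC"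
  shows "local_comp (gr V (adjS (StarToward j) (ty) (c))) v = gr V (adjS (Complete) (\<lambda>i. if i = j then PSS else if ty i = PC then PSC else PSS) (c(j := v)))"
  unfolding LC_adjS[OF v]
proof (rule gr_cong)
  fix x y assume x: "x \<in> V" and y: "y \<in> V" and xy: "x \<noteq> y"
  have px: "pid x \<in> {1..k}" and py: "pid y \<in> {1..k}" and pv: "pid v \<in> {1..k}" using pidV x y v by auto
  have cx: "pid (c (pid x)) = pid x" and cy: "pid (c (pid y)) = pid y" and cv: "pid (c (pid v)) = pid v"
    using pid_c[OF c] px py pv by auto
  have n1: "pid x \<noteq> j \<Longrightarrow> ty (pid x) \<noteq> PSC" "pid y \<noteq> j \<Longrightarrow> ty (pid y) \<noteq> PSC" using noSC px py by auto
  
  show "(adjS (StarToward j) (ty) (c) x y \<noteq> (x \<noteq> v \<and> y \<noteq> v \<and> adjS (StarToward j) (ty) (c) v x \<and> adjS (StarToward j) (ty) (c) v y)) =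
         adjS (Complete) (\<lambda>i. if i = j then PSS else if ty i = PC then PSC else PSS) (c(j := v)) x y"
    unfolding adjS_def isrep_def hadj.simps fun_upd_def using assms n1 xy cx cy cv px py pv
    by (smt (verit) part_type.distinct pt3[of "ty (pid x)"] pt3[of "ty (pid y)"] pt3[of "ty (pid v)"])
qed

lemma T6:
  assumes c: "valid c" and v: "v \<in> V" and j: "pid v = j" and tj: "ty j = PSC" and noSC: "\<forall>i\<in>{1..k}. i \<noteq> j \<longrightarrow> ty i \<noteq> PSC"
  shows "local_comp (gr V (adjS (StarToward j) (ty) (c))) v = gr V (adjS (Complete) (\<lambda>i. if i = j then PSC else if ty i = PC then PSC else PSS) (c))"
  unfolding LC_adjS[OF v]
proof (rule gr_cong)
  fix x y assume x: "x \<in> V" and y: "y \<in> V" and xy: "x \<noteq> y"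
  have px: "pid x \<in> {1..k}" and py: "pid y \<in> {1..k}" and pv: "pid v \<in> {1..k}" using pidV x y v by auto
  have cx: "pid (c (pid x)) = pid x" and cy: "pid (c (pid y)) = pid y" and cv: "pid (c (pid v)) = pid v"
    using pid_c[OF c] px py pv by auto
  have n1: "pid x \<noteq> j \<Longrightarrow> ty (pid x) \<noteq> PSC" "pid y \<noteq> j \<Longrightarrow> ty (pid y) \<noteq> PSC" using noSC px py by auto
  
  show "(adjS (StarToward j) (ty) (c) x y \<noteq> (x \<noteq> v \<and> y \<noteq> v \<and> adjS (StarToward j) (ty) (c) v x \<and> adjS (StarToward j) (ty) (c) v y)) =
         adjS (Complete) (\<lambda>i. if i = j then PSC else if ty i = PC then PSC else PSS) (c) x y"
    unfolding adjS_def isrep_def hadj.simps fun_upd_def using assms n1 xy cx cy cv px py pv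
    by (smt (verit) part_type.distinct pt3[of "ty (pid x)"] pt3[of "ty (pid y)"] pt3[of "ty (pid v)"])
qed

lemma T4:
  assumes c: "valid c" and v: "v \<in> V" and j: "pid v \<noteq> j" and noSC: "\<forall>i\<in>{1..k}. i \<noteq> j \<longrightarrow> ty i \<noteq> PSC" and tj: "ty j = PC" and tl: "ty (pid v) = PC"
  shows "local_comp (gr V (adjS (StarToward j) (ty) (c))) v = gr V (adjS (StarToward j) (ty(j := PSC, pid v := PSS)) (c(pid v := v)))"
  unfolding LC_adjS[OF v]
proof (rule gr_cong)
  fix x y assume x: "x \<in> V" and y: "y \<in> V" and xy: "x \<noteq> y"
  have px: "pid x \<in> {1..k}" and py: "pid y \<in> {1..k}" and pv: "pid v \<in> {1..k}" using pidV x y v by auto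
  have cx: "pid (c (pid x)) = pid x" and cy: "pid (c (pid y)) = pid y" and cv: "pid (c (pid v)) = pid v"
    using pid_c[OF c] px py pv by auto
  have vv: "pid v = pid v" by simp
  
  show "(adjS (StarToward j) (ty) (c) x y \<noteq> (x \<noteq> v \<and> y \<noteq> v \<and> adjS (StarToward j) (ty) (c) v x \<and> adjS (StarToward j) (ty) (c) v y)) =
         adjS (StarToward j) (ty(j := PSC, pid v := PSS)) (c(pid v := v)) x y"
    unfolding adjS_def isrep_def hadj.simps fun_upd_def using assms xy cx cy cv px py pv
    by (smt (verit) part_type.distinct pt3[of "ty (pid x)"] pt3[of "ty (pid y)"] pt3[of "ty (pid v)"])
qed

lemma T7:
  assumes c: "valid c" and v: "v \<in> V" and j: "pid v \<noteq> j" and noSC: "\<forall>i\<in>{1..k}. i \<noteq> j \<longrightarrow> ty i \<noteq> PSC" and tj: "ty j = PSC" and tl: "ty (pid v) = PC"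
  shows "local_comp (gr V (adjS (StarToward j) (ty) (c))) v = gr V (adjS (StarToward j) (ty(j := PC, pid v := PSS)) (c(pid v := v)))"
  unfolding LC_adjS[OF v]
proof (rule gr_cong)
  fix x y assume x: "x \<in> V" and y: "y \<in> V" and xy: "x \<noteq> y"
  have px: "pid x \<in> {1..k}" and py: "pid y \<in> {1..k}" and pv: "pid v \<in> {1..k}" using pidV x y v by auto
  have cx: "pid (c (pid x)) = pid x" and cy: "pid (c (pid y)) = pid y" and cv: "pid (c (pid v)) = pid v"
    using pid_c[OF c] px py pv by auto
  have vv: "pid v = pid v" by simp
  
  show "(adjS (StarToward j) (ty) (c) x y \<noteq> (x \<noteq> v \<and> y \<noteq> v \<and> adjS (StarToward j) (ty) (c) v x \<and> adjS (StarToward j) (ty) (c) v y)) =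
         adjS (StarToward j) (ty(j := PC, pid v := PSS)) (c(pid v := v)) x y"
    unfolding adjS_def isrep_def hadj.simps fun_upd_def using assms xy cx cy cv px py pv
    by (smt (verit) part_type.distinct pt3[of "ty (pid x)"] pt3[of "ty (pid y)"] pt3[of "ty (pid v)"])
qed

lemma T5:
  assumes c: "valid c" and v: "v \<in> V" and j: "pid v \<noteq> j" and noSC: "\<forall>i\<in>{1..k}. i \<noteq> j \<longrightarrow> ty i \<noteq> PSC" and tj: "ty j = PC" and tl: "ty (pid v) = PSS" and vc: "v = c (pid v)"
  shows "local_comp (gr V (adjS (StarToward j) (ty) (c))) v = gr V (adjS (StarToward j) (ty(j := PSC, pid v := PC)) (c))"
  unfolding LC_adjS[OF v]
proof (rule gr_cong)
  fix x y assume x: "x \<in> V" and y: "y \<in> V" and xy: "x \<noteq> y"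
  have px: "pid x \<in> {1..k}" and py: "pid y \<in> {1..k}" and pv: "pid v \<in> {1..k}" using pidV x y v by auto
  have cx: "pid (c (pid x)) = pid x" and cy: "pid (c (pid y)) = pid y" and cv: "pid (c (pid v)) = pid v"
    using pid_c[OF c] px py pv by auto
  have vv: "pid v = pid v" by simp
  
  show "(adjS (StarToward j) (ty) (c) x y \<noteq> (x \<noteq> v \<and> y \<noteq> v \<and> adjS (StarToward j) (ty) (c) v x \<and> adjS (StarToward j) (ty) (c) v y)) =
         adjS (StarToward j) (ty(j := PSC, pid v := PC)) (c) x y"
    unfolding adjS_def isrep_def hadj.simps fun_upd_def using assms xy cx cy cv px py pv
    by (smt (verit) part_type.distinct pt3[of "ty (pid x)"] pt3[of "ty (pid y)"] pt3[of "ty (pid v)"])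
qed

lemma T8:
  assumes c: "valid c" and v: "v \<in> V" and j: "pid v \<noteq> j" and noSC: "\<forall>i\<in>{1..k}. i \<noteq> j \<longrightarrow> ty i \<noteq> PSC" and tj: "ty j = PSC" and tl: "ty (pid v) = PSS" and vc: "v = c (pid v)"
  shows "local_comp (gr V (adjS (StarToward j) (ty) (c))) v = gr V (adjS (StarToward j) (ty(j := PC, pid v := PC)) (c))"
  unfolding LC_adjS[OF v]
proof (rule gr_cong)
  fix x y assume x: "x \<in> V" and y: "y \<in> V" and xy: "x \<noteq> y"
  have px: "pid x \<in> {1..k}" and py: "pid y \<in> {1..k}" and pv: "pid v \<in> {1..k}" using pidV x y v by auto
  have cx: "pid (c (pid x)) = pid x" and cy: "pid (c (pid y)) = pid y" and cv: "pid (c (pid v)) = pid v"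
    using pid_c[OF c] px py pv by auto
  have vv: "pid v = pid v" by simp
  
  show "(adjS (StarToward j) (ty) (c) x y \<noteq> (x \<noteq> v \<and> y \<noteq> v \<and> adjS (StarToward j) (ty) (c) v x \<and> adjS (StarToward j) (ty) (c) v y)) =
         adjS (StarToward j) (ty(j := PC, pid v := PC)) (c) x y"
    unfolding adjS_def isrep_def hadj.simps fun_upd_def using assms xy cx cy cv px py pv
    by (smt (verit) part_type.distinct pt3[of "ty (pid x)"] pt3[of "ty (pid y)"] pt3[of "ty (pid v)"])
qed

end

lemma handshake:
  assumes fV: "finite V" and s: "symp2 P"
  shows "2 * card (gr V P) = (\<Sum>x\<in>V. card {y \<in> V. y \<noteq> x \<and> P x y})"
proof -
  define D where "D = Sigma V (\<lambda>x. {y \<in> V. y \<noteq> x \<and> P x y})"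
  have fD: "finite D" unfolding D_def using fV by auto
  have cD: "card D = (\<Sum>x\<in>V. card {y \<in> V. y \<noteq> x \<and> P x y})"
    unfolding D_def using fV by (subst card_SigmaI) auto
  define A where "A e = {p \<in> D. {fst p, snd p} = e}" for e
  have DU: "D = (\<Union>e\<in>gr V P. A e)"
  proof (rule set_eqI, rule iffI)
    fix p assume "p \<in> D"
    then have "{fst p, snd p} \<in> gr V P" unfolding D_def by (auto intro: grI)
    then show "p \<in> (\<Union>e\<in>gr V P. A e)" using \<open>p \<in> D\<close> unfolding A_def by blast
  qed (auto simp: A_def)
  have fg: "finite (gr V P)"
  proof -
    have "gr V P \<subseteq> Pow V" unfolding gr_def by auto
    then show ?thesis using fV finite_subset by blast
  qed
  have cA: "card (A e) = 2" if he: "e \<in> gr V P" for e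
  proof -
    obtain a b where e: "e = {a, b}" "a \<in> V" "b \<in> V" "a \<noteq> b" "P a b"
      using he unfolding gr_def by blast
    have "P b a" using s e unfolding symp2_def by blast
    have "A e = {(a, b), (b, a)}"
      unfolding A_def D_def e(1) using e \<open>P b a\<close> by (auto simp: doubleton_eq_iff)
    then show ?thesis using e by simp
  qed
  have "card D = (\<Sum>e\<in>gr V P. card (A e))"
    unfolding DU
  proof (rule card_UN_disjoint[OF fg])
    show "\<forall>e\<in>gr V P. finite (A e)" using fD unfolding A_def by auto
    show "\<forall>e\<in>gr V P. \<forall>e'\<in>gr V P. e \<noteq> e' \<longrightarrow> A e \<inter> A e' = {}" unfolding A_def by auto
  qed
  also have "\<dots> = 2 * card (gr V P)" using cA by simp
  finally show ?thesis using cD by simp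
qed

context mp begin

definition nn :: "nat \<Rightarrow> nat" where "nn i = card (U i)"
definition rr :: "(nat \<Rightarrow> part_type) \<Rightarrow> nat \<Rightarrow> nat" where
  "rr ty i = (if ty i = PSS then 1 else nn i)"
definition intraS :: "(nat \<Rightarrow> part_type) \<Rightarrow> nat \<Rightarrow> nat" where
  "intraS ty i = (case ty i of PC \<Rightarrow> nn i * (nn i - 1) | PSC \<Rightarrow> 0 | PSS \<Rightarrow> 2 * (nn i - 1))"
definition ideg :: "(nat \<Rightarrow> part_type) \<Rightarrow> (nat \<Rightarrow> 'a) \<Rightarrow> 'a \<Rightarrow> nat" where
  "ideg ty c x = (case ty (pid x) of PC \<Rightarrow> nn (pid x) - 1 | PSC \<Rightarrow> 0
      | PSS \<Rightarrow> (if x = c (pid x) then nn (pid x) - 1 else 1))"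
definition hsum :: "central_type \<Rightarrow> (nat \<Rightarrow> part_type) \<Rightarrow> nat \<Rightarrow> nat" where
  "hsum ct ty i = (\<Sum>l\<in>{1..k}-{i}. if hadj ct i l then rr ty l else 0)"

lemma finV: "finite V" using fin V_def by auto

lemma deg_split:
  assumes x: "x \<in> V"
  shows "card {y \<in> V. y \<noteq> x \<and> P y} = (\<Sum>l\<in>{1..k}. card {y \<in> U l. y \<noteq> x \<and> P y})"
proof -
  have "{y \<in> V. y \<noteq> x \<and> P y} = (\<Union>l\<in>{1..k}. {y \<in> U l. y \<noteq> x \<and> P y})"
    unfolding V_def by auto
  moreover have "card (\<Union>l\<in>{1..k}. {y \<in> U l. y \<noteq> x \<and> P y}) = (\<Sum>l\<in>{1..k}. card {y \<in> U l. y \<noteq> x \<and> P y})"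
  proof (rule card_UN_disjoint)
    show "finite {1..k}" by simp
    show "\<forall>i\<in>{1..k}. finite {y \<in> U i. y \<noteq> x \<and> P y}" using fin by simp
    show "\<forall>i\<in>{1..k}. \<forall>j\<in>{1..k}. i \<noteq> j \<longrightarrow> {y \<in> U i. y \<noteq> x \<and> P y} \<inter> {y \<in> U j. y \<noteq> x \<and> P y} = {}"
      using disj by blast
  qed
  ultimately show ?thesis by simp
qed

lemma deg_same:
  assumes c: "valid c" and i: "i \<in> {1..k}" and x: "x \<in> U i"
  shows "card {y \<in> U i. y \<noteq> x \<and> adjS ct ty c x y} = ideg ty c x"
proof -
  have px: "pid x = i" using pid i x by blast
  have cU: "c i \<in> U i" using c i unfolding valid_def by blast
  have pidU: "\<And>y. y \<in> U i \<Longrightarrow> pid y = i" using pid i by blast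
  have f: "finite (U i)" using fin i by blast
  show ?thesis
  proof (cases "ty i")
    case PC
    have "{y \<in> U i. y \<noteq> x \<and> adjS ct ty c x y} = U i - {x}"
      unfolding adjS_def px using PC pidU by auto
    then show ?thesis unfolding ideg_def nn_def px using PC x f by simp
  next
    case PSC
    have E: "{y \<in> U i. y \<noteq> x \<and> adjS ct ty c x y} = {}"
      unfolding adjS_def px using PSC pidU by auto
    have "ideg ty c x = 0" unfolding ideg_def px using PSC by simp
    then show ?thesis unfolding E by simp
  next
    case PSS
    show ?thesis
    proof (cases "x = c i")
      case True
      have "{y \<in> U i. y \<noteq> x \<and> adjS ct ty c x y} = U i - {x}"
        unfolding adjS_def px using PSS True pidU by auto
      then show ?thesis unfolding ideg_def nn_def px using PSS True x f by simp
    next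
      case False
      have E: "{y \<in> U i. y \<noteq> x \<and> adjS ct ty c x y} = {c i}"
      proof (intro equalityI subsetI)
        fix y assume "y \<in> {y \<in> U i. y \<noteq> x \<and> adjS ct ty c x y}"
        then have y: "y \<in> U i" "adjS ct ty c x y" by auto
        then have "pid y = i" using pidU by blast
        then show "y \<in> {c i}" using y(2) PSS False unfolding adjS_def px by auto
      next
        fix y assume "y \<in> {c i}" then have y: "y = c i" by simp
        have "pid (c i) = i" using pidU cU by blast
        then have "adjS ct ty c x (c i)" using PSS unfolding adjS_def px by simp
        then show "y \<in> {y \<in> U i. y \<noteq> x \<and> adjS ct ty c x y}" using y cU False by auto
      qed
      have "ideg ty c x = 1" unfolding ideg_def px using PSS False by simp
      then show ?thesis unfolding E by simp
    qed
  qed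
qed

lemma card_reps:
  assumes c: "valid c" and l: "l \<in> {1..k}"
  shows "card {y \<in> U l. isrep ty c y} = rr ty l"
proof -
  have pidU: "y \<in> U l \<Longrightarrow> pid y = l" for y using pid l by blast
  have cU: "c l \<in> U l" using c l unfolding valid_def by blast
  show ?thesis
  proof (cases "ty l = PSS")
    case True
    then have "{y \<in> U l. isrep ty c y} = {c l}" unfolding isrep_def using pidU cU by auto
    then show ?thesis unfolding rr_def using True by simp
  next
    case False
    then have "{y \<in> U l. isrep ty c y} = U l" unfolding isrep_def using pidU by auto
    then show ?thesis unfolding rr_def nn_def using False by simp
  qed
qed

lemma deg_other:
  assumes c: "valid c" and x: "x \<in> V" and l: "l \<in> {1..k}" "l \<noteq> pid x"
  shows "card {y \<in> U l. y \<noteq> x \<and> adjS ct ty c x y} =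
      (if isrep ty c x \<and> hadj ct (pid x) l then rr ty l else 0)"
proof -
  have pidU: "y \<in> U l \<Longrightarrow> pid y = l" for y using pid l by blast
  have "{y \<in> U l. y \<noteq> x \<and> adjS ct ty c x y} =
      (if isrep ty c x \<and> hadj ct (pid x) l then {y \<in> U l. isrep ty c y} else {})"
    unfolding adjS_def using pidU l by auto
  then show ?thesis using card_reps[OF c l(1)] by simp
qed

lemma degree:
  assumes c: "valid c" and x: "x \<in> V"
  shows "card {y \<in> V. y \<noteq> x \<and> adjS ct ty c x y} =
     ideg ty c x + (if isrep ty c x then hsum ct ty (pid x) else 0)"
proof -
  have px: "pid x \<in> {1..k}" using pidV x by auto
  have "card {y \<in> V. y \<noteq> x \<and> adjS ct ty c x y} = (\<Sum>l\<in>{1..k}. card {y \<in> U l. y \<noteq> x \<and> adjS ct ty c x y})"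
    by (rule deg_split[OF x])
  also have "\<dots> = card {y \<in> U (pid x). y \<noteq> x \<and> adjS ct ty c x y} +
      (\<Sum>l\<in>{1..k}-{pid x}. card {y \<in> U l. y \<noteq> x \<and> adjS ct ty c x y})"
    by (rule sum.remove) (use px in auto)
  also have "(\<Sum>l\<in>{1..k}-{pid x}. card {y \<in> U l. y \<noteq> x \<and> adjS ct ty c x y}) =
      (\<Sum>l\<in>{1..k}-{pid x}. if isrep ty c x \<and> hadj ct (pid x) l then rr ty l else 0)"
    by (rule sum.cong) (use deg_other[OF c x] in auto)
  also have "\<dots> = (if isrep ty c x then hsum ct ty (pid x) else 0)"
    by (cases "isrep ty c x") (simp_all add: hsum_def)
  finally show ?thesis using deg_same[OF c px pidV3[OF x]] by simp
qed

lemma part_sum: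
  assumes c: "valid c" and i: "i \<in> {1..k}"
  shows "(\<Sum>x\<in>U i. card {y \<in> V. y \<noteq> x \<and> adjS ct ty c x y}) = intraS ty i + rr ty i * hsum ct ty i"
proof -
  have pidU: "x \<in> U i \<Longrightarrow> pid x = i" for x using pid i by blast
  have xV: "x \<in> U i \<Longrightarrow> x \<in> V" for x using inV i by blast
  have f: "finite (U i)" using fin i by blast
  have cU: "c i \<in> U i" using c i unfolding valid_def by blast
  have "(\<Sum>x\<in>U i. card {y \<in> V. y \<noteq> x \<and> adjS ct ty c x y}) =
        (\<Sum>x\<in>U i. ideg ty c x + (if isrep ty c x then hsum ct ty i else 0))"
    by (rule sum.cong) (use degree[OF c] xV pidU in auto)
  also have "\<dots> = (\<Sum>x\<in>U i. ideg ty c x) + (\<Sum>x\<in>U i. if isrep ty c x then hsum ct ty i else 0)"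
    by (rule sum.distrib)
  also have "(\<Sum>x\<in>U i. if isrep ty c x then hsum ct ty i else 0) = card {x \<in> U i. isrep ty c x} * hsum ct ty i"
    using sum.inter_filter[OF f, of "\<lambda>_. hsum ct ty i" "\<lambda>x. isrep ty c x"] by simp
  also have "card {x \<in> U i. isrep ty c x} = rr ty i" by (rule card_reps[OF c i])
  also have "(\<Sum>x\<in>U i. ideg ty c x) = intraS ty i"
  proof (cases "ty i")
    case PC
    then have "(\<Sum>x\<in>U i. ideg ty c x) = (\<Sum>x\<in>U i. nn i - 1)"
      by (intro sum.cong) (auto simp: ideg_def pidU)
    then show ?thesis using PC unfolding intraS_def nn_def by simp
  next
    case PSC
    then show ?thesis unfolding intraS_def ideg_def using pidU by simp
  next
    case PSS
    have "(\<Sum>x\<in>U i. ideg ty c x) = ideg ty c (c i) + (\<Sum>x\<in>U i - {c i}. ideg ty c x)"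
      by (rule sum.remove[OF f cU])
    also have "(\<Sum>x\<in>U i - {c i}. ideg ty c x) = (\<Sum>x\<in>U i - {c i}. 1)"
      by (rule sum.cong) (use PSS pidU in \<open>auto simp: ideg_def\<close>)
    also have "\<dots> = nn i - 1" using f cU unfolding nn_def by simp
    also have "ideg ty c (c i) = nn i - 1" unfolding ideg_def using PSS pidU[OF cU] by simp
    finally show ?thesis unfolding intraS_def using PSS by simp
  qed
  finally show ?thesis .
qed

lemma count:
  assumes c: "valid c"
  shows "2 * card (gr V (adjS ct ty c)) = (\<Sum>i\<in>{1..k}. intraS ty i + rr ty i * hsum ct ty i)"
proof -
  have "2 * card (gr V (adjS ct ty c)) = (\<Sum>x\<in>V. card {y \<in> V. y \<noteq> x \<and> adjS ct ty c x y})"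
    by (rule handshake[OF finV adjS_sym])
  also have "\<dots> = (\<Sum>i\<in>{1..k}. \<Sum>x\<in>U i. card {y \<in> V. y \<noteq> x \<and> adjS ct ty c x y})"
    unfolding V_def
  proof (rule sum.UNION_disjoint)
    show "finite {1..k}" by simp
    show "\<forall>i\<in>{1..k}. finite (U i)" using fin by simp
    show "\<forall>i\<in>{1..k}. \<forall>j\<in>{1..k}. i \<noteq> j \<longrightarrow> U i \<inter> U j = {}" using disj by blast
  qed
  also have "\<dots> = (\<Sum>i\<in>{1..k}. intraS ty i + rr ty i * hsum ct ty i)"
    by (rule sum.cong) (use part_sum[OF c] in auto)
  finally show ?thesis .
qed

end

context mp begin

definition shape_ok :: "central_type \<Rightarrow> (nat \<Rightarrow> part_type) \<Rightarrow> bool" where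
  "shape_ok ct ty = (case ct of
      Complete \<Rightarrow> (\<forall>i\<in>{1..k}. ty i \<noteq> PC) \<and> even (card {i\<in>{1..k}. ty i = PSS})
    | StarToward j \<Rightarrow> j \<in> {1..k} \<and> ty j \<noteq> PSS \<and> (\<forall>i\<in>{1..k}. i \<noteq> j \<longrightarrow> ty i \<noteq> PSC) \<and>
         (ty j = PC \<longleftrightarrow> odd (card {i\<in>{1..k}. i \<noteq> j \<and> ty i = PSS})))"

definition inF :: "'a set set \<Rightarrow> bool" where
  "inF E = (\<exists>ct ty c. valid c \<and> shape_ok ct ty \<and> E = gr V (adjS ct ty c))"

lemma valid_upd: assumes c: "valid c" and v: "v \<in> V" shows "valid (c(pid v := v))"
  unfolding valid_def
proof
  fix i assume i: "i \<in> {1..k}"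
  show "(c(pid v := v)) i \<in> U i"
  proof (cases "i = pid v")
    case True
    then show ?thesis using pidV[OF v] by simp
  next
    case False
    then show ?thesis using c i unfolding valid_def by simp
  qed
qed

lemma card_ge1: assumes "finite S" "p \<in> S" shows "card S \<ge> 1"
proof -
  have "S \<noteq> {}" using assms(2) by blast
  then have "card S > 0" using assms(1) card_gt_0_iff by blast
  then show ?thesis by simp
qed

lemma odd_pred: "(N::nat) \<ge> 1 \<Longrightarrow> even N \<Longrightarrow> odd (N - 1)"
  by (cases N) auto

lemma odd_pred2: "(N::nat) \<ge> 1 \<Longrightarrow> odd (N - 1) = even N"
  by (cases N) auto

lemma inF_lc:
  assumes F: "inF E" and v: "v \<in> V"
  shows "inF (local_comp E v)"
proof -
  obtain ct ty c where c: "valid c" and sh: "shape_ok ct ty" and E: "E = gr V (adjS ct ty c)"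
    using F unfolding inF_def by blast
  have p: "pid v \<in> {1..k}" using pidV v by blast
  show ?thesis
  proof (cases ct)
    case Complete
    have noPC: "\<forall>i\<in>{1..k}. ty i \<noteq> PC" and ev: "even (card {i\<in>{1..k}. ty i = PSS})"
      using sh unfolding Complete shape_ok_def central_type.case by blast+
    have "ty (pid v) \<noteq> PC" using noPC p by blast
    then consider (a) "ty (pid v) = PSC" | (b) "ty (pid v) = PSS" using pt3 by blast
    then show ?thesis
    proof cases
      case a
      define ty' where "ty' = (\<lambda>i. if i = pid v then PSC else if ty i = PSC then PC else PSS)"
      have L: "local_comp E v = gr V (adjS (StarToward (pid v)) ty' c)"
        unfolding E Complete ty'_def by (rule T1[OF c v a noPC])
      have "{i\<in>{1..k}. i \<noteq> pid v \<and> ty' i = PSS} = {i\<in>{1..k}. ty i = PSS}"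
      proof (rule Collect_cong)
        fix i show "(i \<in> {1..k} \<and> i \<noteq> pid v \<and> ty' i = PSS) = (i \<in> {1..k} \<and> ty i = PSS)"
          using a noPC pt3[of "ty i"] unfolding ty'_def by (cases "i = pid v") auto
      qed
      then have "shape_ok (StarToward (pid v)) ty'"
        unfolding shape_ok_def central_type.case using p ev unfolding ty'_def by simp
      then show ?thesis unfolding inF_def using L c by blast
    next
      case b
      show ?thesis
      proof (cases "v = c (pid v)")
        case False
        have "local_comp E v = E" unfolding E by (rule T0[where ct=ct and ty=ty and c=c, OF c v b False])
        then show ?thesis using F by simp
      next
        case True
        define ty' where "ty' = (\<lambda>i. if i = pid v then PC else if ty i = PSC then PC else PSS)"
        have L: "local_comp E v = gr V (adjS (StarToward (pid v)) ty' c)"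
          unfolding E Complete ty'_def by (rule T2[OF c v b True noPC])
        have S: "{i\<in>{1..k}. i \<noteq> pid v \<and> ty' i = PSS} = {i\<in>{1..k}. ty i = PSS} - {pid v}"
        proof (rule set_eqI)
          fix i show "(i \<in> {i\<in>{1..k}. i \<noteq> pid v \<and> ty' i = PSS}) = (i \<in> {i\<in>{1..k}. ty i = PSS} - {pid v})"
            using noPC pt3[of "ty i"] unfolding ty'_def by (cases "i = pid v") auto
        qed
        have fin1: "finite {i\<in>{1..k}. ty i = PSS}" by simp
        have mem: "pid v \<in> {i\<in>{1..k}. ty i = PSS}" using b p by blast
        have "card ({i\<in>{1..k}. ty i = PSS} - {pid v}) = card {i\<in>{1..k}. ty i = PSS} - 1"
          by (rule card_Diff_singleton[OF mem])
        moreover have c1: "card {i\<in>{1..k}. ty i = PSS} \<ge> 1" by (rule card_ge1[OF fin1 mem])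
        moreover have "odd (card {i\<in>{1..k}. ty i = PSS} - 1)"
          using odd_pred[OF c1 ev] .
        ultimately have "odd (card {i\<in>{1..k}. i \<noteq> pid v \<and> ty' i = PSS})"
          unfolding S by simp
        moreover have "ty' (pid v) = PC" unfolding ty'_def by simp
        ultimately have "shape_ok (StarToward (pid v)) ty'"
          unfolding shape_ok_def central_type.case using p unfolding ty'_def by simp
        then show ?thesis unfolding inF_def using L c by blast
      qed
    qed
  next
    case (StarToward j)
    have j: "j \<in> {1..k}" and tj: "ty j \<noteq> PSS" and noSC: "\<forall>i\<in>{1..k}. i \<noteq> j \<longrightarrow> ty i \<noteq> PSC"
      and par: "ty j = PC \<longleftrightarrow> odd (card {i\<in>{1..k}. i \<noteq> j \<and> ty i = PSS})"
      using sh unfolding StarToward shape_ok_def central_type.case by blast+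
    define S where "S = {i\<in>{1..k}. i \<noteq> j \<and> ty i = PSS}"
    have fS: "finite S" unfolding S_def by simp
    show ?thesis
    proof (cases "pid v = j")
      case True
      consider (a) "ty j = PC" | (b) "ty j = PSC" using tj pt3 by blast
      then show ?thesis
      proof cases
        case a
        define ty' where "ty' = (\<lambda>i. if i = j then PSS else if ty i = PC then PSC else PSS)"
        have L: "local_comp E v = gr V (adjS Complete ty' (c(j := v)))"
          unfolding E StarToward ty'_def by (rule T3[OF c v True a noSC])
        have SS: "{i\<in>{1..k}. ty' i = PSS} = insert j S"
        proof (rule set_eqI)
          fix i show "(i \<in> {i\<in>{1..k}. ty' i = PSS}) = (i \<in> insert j S)"
            using noSC j pt3[of "ty i"] unfolding ty'_def S_def by (cases "i = j") auto
        qed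
        have "j \<notin> S" unfolding S_def by simp
        then have "card (insert j S) = Suc (card S)" using fS by simp
        then have "even (card {i\<in>{1..k}. ty' i = PSS})"
          using par a unfolding SS S_def by simp
        moreover have "\<forall>i\<in>{1..k}. ty' i \<noteq> PC" unfolding ty'_def by simp
        ultimately have "shape_ok Complete ty'" unfolding shape_ok_def central_type.case by blast
        moreover have "valid (c(j := v))" using valid_upd[OF c v] True by simp
        ultimately show ?thesis unfolding inF_def using L by blast
      next
        case b
        define ty' where "ty' = (\<lambda>i. if i = j then PSC else if ty i = PC then PSC else PSS)"
        have L: "local_comp E v = gr V (adjS Complete ty' c)"
          unfolding E StarToward ty'_def by (rule T6[OF c v True b noSC])
        have SS: "{i\<in>{1..k}. ty' i = PSS} = S"
        proof (rule set_eqI)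
          fix i show "(i \<in> {i\<in>{1..k}. ty' i = PSS}) = (i \<in> S)"
            using noSC j pt3[of "ty i"] unfolding ty'_def S_def by (cases "i = j") auto
        qed
        have "even (card {i\<in>{1..k}. ty' i = PSS})"
          using par b unfolding SS S_def by simp
        moreover have "\<forall>i\<in>{1..k}. ty' i \<noteq> PC" unfolding ty'_def by simp
        ultimately have "shape_ok Complete ty'" unfolding shape_ok_def central_type.case by blast
        then show ?thesis unfolding inF_def using L c by blast
      qed
    next
      case False
      have "ty (pid v) \<noteq> PSC" using noSC p False by blast
      then consider (a) "ty (pid v) = PC" | (b) "ty (pid v) = PSS" using pt3 by blast
      then show ?thesis
      proof cases
        case a
        define ty' where "ty' = ty(j := (if ty j = PC then PSC else PC), pid v := PSS)"
        have L: "local_comp E v = gr V (adjS (StarToward j) ty' (c(pid v := v)))"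
        proof (cases "ty j = PC")
          case True
          show ?thesis unfolding E StarToward ty'_def using True T4[OF c v False noSC True a] by simp
        next
          case False2: False
          then have "ty j = PSC" using tj pt3 by blast
          then show ?thesis unfolding E StarToward ty'_def using False2 T7[OF c v False noSC _ a] by simp
        qed
        have S': "{i\<in>{1..k}. i \<noteq> j \<and> ty' i = PSS} = insert (pid v) S"
        proof (rule set_eqI)
          fix i show "(i \<in> {i\<in>{1..k}. i \<noteq> j \<and> ty' i = PSS}) = (i \<in> insert (pid v) S)"
            using False p unfolding ty'_def S_def by (cases "i = pid v") auto
        qed
        have "pid v \<notin> S" using a unfolding S_def by simp
        then have cS: "card (insert (pid v) S) = Suc (card S)" using fS by simp
        have "ty' j = (if ty j = PC then PSC else PC)" unfolding ty'_def using False by simp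
        then have "ty' j \<noteq> PSS" "(ty' j = PC) = odd (card {i\<in>{1..k}. i \<noteq> j \<and> ty' i = PSS})"
          using par cS unfolding S' S_def by auto
        moreover have "\<forall>i\<in>{1..k}. i \<noteq> j \<longrightarrow> ty' i \<noteq> PSC" using noSC unfolding ty'_def by simp
        ultimately have "shape_ok (StarToward j) ty'"
          unfolding shape_ok_def central_type.case using j by blast
        moreover have "valid (c(pid v := v))" using valid_upd[OF c v] by simp
        ultimately show ?thesis unfolding inF_def using L by blast
      next
        case b
        show ?thesis
        proof (cases "v = c (pid v)")
          case False2: False
          have "local_comp E v = E" unfolding E by (rule T0[where ct=ct and ty=ty and c=c, OF c v b False2])
          then show ?thesis using F by simp
        next
          case True
          define ty' where "ty' = ty(j := (if ty j = PC then PSC else PC), pid v := PC)"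
          have L: "local_comp E v = gr V (adjS (StarToward j) ty' c)"
          proof (cases "ty j = PC")
            case True2: True
            show ?thesis unfolding E StarToward ty'_def using True2 T5[OF c v False noSC True2 b True] by simp
          next
            case False2: False
            then have "ty j = PSC" using tj pt3 by blast
            then show ?thesis unfolding E StarToward ty'_def using False2 T8[OF c v False noSC _ b True] by simp
          qed
          have S': "{i\<in>{1..k}. i \<noteq> j \<and> ty' i = PSS} = S - {pid v}"
          proof (rule set_eqI)
            fix i show "(i \<in> {i\<in>{1..k}. i \<noteq> j \<and> ty' i = PSS}) = (i \<in> S - {pid v})"
              using False p unfolding ty'_def S_def by (cases "i = pid v") auto
          qed
          have mem: "pid v \<in> S" using b p False unfolding S_def by simp
          have cS: "card (S - {pid v}) = card S - 1" by (rule card_Diff_singleton[OF mem])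
          have cS1: "card S \<ge> 1" by (rule card_ge1[OF fS mem])
          have "ty' j = (if ty j = PC then PSC else PC)" unfolding ty'_def using False by simp
          moreover have "odd (card S - 1) = even (card S)" using odd_pred2[OF cS1] .
          ultimately have "ty' j \<noteq> PSS" "(ty' j = PC) = odd (card {i\<in>{1..k}. i \<noteq> j \<and> ty' i = PSS})"
            using par cS unfolding S' S_def by auto
          moreover have "\<forall>i\<in>{1..k}. i \<noteq> j \<longrightarrow> ty' i \<noteq> PSC" using noSC unfolding ty'_def by simp
          ultimately have "shape_ok (StarToward j) ty'"
            unfolding shape_ok_def central_type.case using j by blast
          then show ?thesis unfolding inF_def using L c by blast
        qed
      qed
    qed
  qed
qed

end

context mp begin

lemma exists_valid: "\<exists>c. valid c"
proof -
  have "U i \<noteq> {}" if "i \<in> {1..k}" for i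
    using two[OF that] by (metis card.empty not_numeral_le_zero)
  then have "valid (\<lambda>i. SOME x. x \<in> U i)" unfolding valid_def by (simp add: some_in_eq)
  then show ?thesis by blast
qed

lemma orbit_F:
  assumes "H \<in> lc_orbit V (complete_multipartite k U)"
  shows "inF H"
  using assms
proof (induction rule: lc_orbit.induct)
  case base
  obtain c where c: "valid c" using exists_valid by blast
  have "shape_ok Complete (\<lambda>_. PSC)" unfolding shape_ok_def by simp
  then show ?case unfolding inF_def K_eq[of c] using c by blast
next
  case (step H v)
  then show ?case using inF_lc by blast
qed

definition tyS :: "nat \<Rightarrow> nat set \<Rightarrow> nat \<Rightarrow> part_type" where
  "tyS j S = (\<lambda>i. if i = j then (if even (card S) then PSC else PC) else if i \<in> S then PSS else PC)"

lemma reach: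
  assumes c: "valid c" and j: "j \<in> {1..k}" and S: "finite S" "S \<subseteq> {1..k} - {j}"
  shows "gr V (adjS (StarToward j) (tyS j S) c) \<in> lc_orbit V (complete_multipartite k U)"
  using S
proof (induction S rule: finite_induct)
  case empty
  have cj: "c j \<in> V" "pid (c j) = j" using c j inV pid unfolding valid_def by auto
  have K: "complete_multipartite k U = gr V (adjS Complete (\<lambda>_. PSC) c)" by (rule K_eq)
  have "local_comp (gr V (adjS Complete (\<lambda>_. PSC) c)) (c j) =
     gr V (adjS (StarToward (pid (c j))) (\<lambda>i. if i = pid (c j) then PSC else if PSC = PSC then PC else PSS) c)"
    by (rule T1[OF c cj(1)]) auto
  also have "(\<lambda>i. if i = pid (c j) then PSC else if PSC = PSC then PC else PSS) = tyS j {}"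
    unfolding tyS_def cj(2) by auto
  finally have "local_comp (complete_multipartite k U) (c j) = gr V (adjS (StarToward j) (tyS j {}) c)"
    unfolding K cj(2) .
  then show ?case using lc_orbit.step[OF lc_orbit.base cj(1)] by metis
next
  case (insert l S)
  have IH: "gr V (adjS (StarToward j) (tyS j S) c) \<in> lc_orbit V (complete_multipartite k U)"
    using insert by blast
  have l: "l \<in> {1..k}" "l \<noteq> j" using insert by auto
  have cl: "c l \<in> V" "pid (c l) = l" using c l inV pid unfolding valid_def by auto
  have noSC: "\<forall>i\<in>{1..k}. i \<noteq> j \<longrightarrow> tyS j S i \<noteq> PSC" unfolding tyS_def by auto
  have tl: "tyS j S (pid (c l)) = PC" using cl insert l unfolding tyS_def by auto
  have cS: "card (insert l S) = Suc (card S)" using insert by simp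
  have "local_comp (gr V (adjS (StarToward j) (tyS j S) c)) (c l) = gr V (adjS (StarToward j) (tyS j (insert l S)) c)"
  proof (cases "even (card S)")
    case True
    have tj: "tyS j S j = PSC" unfolding tyS_def using True by simp
    have "local_comp (gr V (adjS (StarToward j) (tyS j S) c)) (c l) =
        gr V (adjS (StarToward j) ((tyS j S)(j := PC, pid (c l) := PSS)) (c(pid (c l) := c l)))"
      by (rule T7[OF c cl(1) _ noSC tj tl]) (use cl l in simp)
    also have "(tyS j S)(j := PC, pid (c l) := PSS) = tyS j (insert l S)"
      unfolding cl(2) tyS_def using True cS l by (auto simp: fun_eq_iff)
    finally show ?thesis using cl(2) by simp
  next
    case False
    have tj: "tyS j S j = PC" unfolding tyS_def using False by simp
    have "local_comp (gr V (adjS (StarToward j) (tyS j S) c)) (c l) =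
        gr V (adjS (StarToward j) ((tyS j S)(j := PSC, pid (c l) := PSS)) (c(pid (c l) := c l)))"
      by (rule T4[OF c cl(1) _ noSC tj tl]) (use cl l in simp)
    also have "(tyS j S)(j := PSC, pid (c l) := PSS) = tyS j (insert l S)"
      unfolding cl(2) tyS_def using False cS l by (auto simp: fun_eq_iff)
    finally show ?thesis using cl(2) by simp
  qed
  then show ?case using lc_orbit.step[OF IH cl(1)] by metis
qed

lemma adjS_ty_cong:
  assumes "\<And>i. i \<in> {1..k} \<Longrightarrow> ty i = ty' i"
  shows "gr V (adjS ct ty c) = gr V (adjS ct ty' c)"
proof (rule gr_cong)
  fix x y assume "x \<in> V" "y \<in> V"
  then have "ty (pid x) = ty' (pid x)" "ty (pid y) = ty' (pid y)" using assms pidV by auto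
  then show "adjS ct ty c x y = adjS ct ty' c x y" unfolding adjS_def isrep_def by simp
qed

lemma reach_full:
  assumes c: "valid c" and j: "j \<in> {1..k}"
  shows "gr V (adjS (StarToward j) (\<lambda>i. if i = j then (if even (k - 1) then PSC else PC) else PSS) c)
      \<in> lc_orbit V (complete_multipartite k U)"
proof -
  have cS: "card ({1..k} - {j}) = k - 1" using j by simp
  have "gr V (adjS (StarToward j) (tyS j ({1..k} - {j})) c) =
        gr V (adjS (StarToward j) (\<lambda>i. if i = j then (if even (k - 1) then PSC else PC) else PSS) c)"
    by (rule adjS_ty_cong) (auto simp: tyS_def cS)
  then show ?thesis using reach[OF c j, of "{1..k} - {j}"] by simp
qed

lemma reach_G1:
  assumes c: "valid c" and ke: "even k" and k1: "k \<ge> 1"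
  shows "gr V (adjS Complete (\<lambda>i. PSS) c) \<in> lc_orbit V (complete_multipartite k U)"
proof -
  have j: "1 \<in> {1..k}" using k1 by simp
  have odd: "even (k - 1) = False" using ke k1 by simp
  let ?ty = "\<lambda>i. if i = 1 then PC else PSS"
  have R: "gr V (adjS (StarToward 1) ?ty c) \<in> lc_orbit V (complete_multipartite k U)"
    using reach_full[OF c j] by (simp only: odd if_False)
  have cU: "c 1 \<in> U 1" using c j unfolding valid_def by blast
  have cj: "c 1 \<in> V" "pid (c 1) = 1" using inV[OF j cU] pid[OF j cU] by auto
  have "local_comp (gr V (adjS (StarToward 1) ?ty c)) (c 1) =
     gr V (adjS Complete (\<lambda>i. if i = 1 then PSS else if ?ty i = PC then PSC else PSS) (c(1 := c 1)))"
    by (rule T3[OF c cj(1) cj(2)]) auto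
  also have "\<dots> = gr V (adjS Complete (\<lambda>i. PSS) c)"
    by (simp cong: if_cong)
  finally show ?thesis using lc_orbit.step[OF R cj(1)] by metis
qed

end

context mp begin

definition Sm :: real where "Sm = (\<Sum>i\<in>{1..k}. real (nn i) - 1)"

lemma nn2: "i \<in> {1..k} \<Longrightarrow> real (nn i) \<ge> 2"
  using two unfolding nn_def by simp

lemma rr1: "i \<in> {1..k} \<Longrightarrow> real (rr ty i) \<ge> 1"
  using nn2[of i] unfolding rr_def by auto

lemma Sm_remove: "j \<in> {1..k} \<Longrightarrow> (\<Sum>i\<in>{1..k}-{j}. real (nn i) - 1) = Sm - (real (nn j) - 1)"
  unfolding Sm_def using sum.remove[of "{1..k}" j "\<lambda>i. real (nn i) - 1"] by simp

lemma count_real: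
  assumes c: "valid c"
  shows "2 * real (card (gr V (adjS ct ty c))) = (\<Sum>i\<in>{1..k}. real (intraS ty i) + real (rr ty i) * real (hsum ct ty i))"
proof -
  have "real (2 * card (gr V (adjS ct ty c))) = real (\<Sum>i\<in>{1..k}. intraS ty i + rr ty i * hsum ct ty i)"
    using count[OF c] by simp
  then show ?thesis by simp
qed

lemma hsum_star_j:
  "hsum (StarToward j) ty j = (\<Sum>l\<in>{1..k}-{j}. rr ty l)"
  unfolding hsum_def by simp

lemma hsum_star_i:
  assumes "i \<noteq> j" "j \<in> {1..k}"
  shows "hsum (StarToward j) ty i = rr ty j"
proof -
  have "hsum (StarToward j) ty i = (\<Sum>l\<in>{1..k}-{i}. if l = j then rr ty l else 0)"
    unfolding hsum_def using assms by (intro sum.cong) auto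
  also have "\<dots> = rr ty j" using assms by (simp add: sum.delta)
  finally show ?thesis .
qed

lemma star_count:
  assumes c: "valid c" and j: "j \<in> {1..k}" and tj: "ty j \<noteq> PSS"
  shows "2 * real (card (gr V (adjS (StarToward j) ty c))) =
     real (intraS ty j) + (\<Sum>i\<in>{1..k}-{j}. real (intraS ty i) + 2 * real (nn j) * real (rr ty i))"
proof -
  have rj: "rr ty j = nn j" unfolding rr_def using tj by simp
  let ?f = "\<lambda>i. real (intraS ty i) + real (rr ty i) * real (hsum (StarToward j) ty i)"
  have "2 * real (card (gr V (adjS (StarToward j) ty c))) = (\<Sum>i\<in>{1..k}. ?f i)"
    by (rule count_real[OF c])
  also have "\<dots> = ?f j + (\<Sum>i\<in>{1..k}-{j}. ?f i)"
    by (rule sum.remove) (use j in auto)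
  also have "(\<Sum>i\<in>{1..k}-{j}. ?f i) = (\<Sum>i\<in>{1..k}-{j}. real (intraS ty i) + real (rr ty i) * real (nn j))"
    by (rule sum.cong) (auto simp: hsum_star_i[OF _ j] rj)
  also have "?f j = real (intraS ty j) + (\<Sum>i\<in>{1..k}-{j}. real (nn j) * real (rr ty i))"
    unfolding hsum_star_j rj by (simp add: sum_distrib_left)
  finally have "2 * real (card (gr V (adjS (StarToward j) ty c))) =
     real (intraS ty j) + ((\<Sum>i\<in>{1..k}-{j}. real (nn j) * real (rr ty i)) +
        (\<Sum>i\<in>{1..k}-{j}. real (intraS ty i) + real (rr ty i) * real (nn j)))" by simp
  also have "(\<Sum>i\<in>{1..k}-{j}. real (nn j) * real (rr ty i)) +
        (\<Sum>i\<in>{1..k}-{j}. real (intraS ty i) + real (rr ty i) * real (nn j)) =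
      (\<Sum>i\<in>{1..k}-{j}. real (intraS ty i) + 2 * real (nn j) * real (rr ty i))"
    by (simp add: sum.distrib[symmetric] algebra_simps)
  finally show ?thesis .
qed

definition M3 :: "nat \<Rightarrow> real" where "M3 j = Sm + (real k - 2) * real (nn j) + 1"
definition M2 :: "nat \<Rightarrow> real" where "M2 j = M3 j + real (nn j) * (real (nn j) - 1) / 2"
definition M1 :: real where "M1 = Sm + real k * (real k - 1) / 2"

lemma intraS_real:
  assumes i: "i \<in> {1..k}"
  shows "real (intraS ty i) = (case ty i of PC \<Rightarrow> real (nn i) * (real (nn i) - 1) | PSC \<Rightarrow> 0
      | PSS \<Rightarrow> 2 * (real (nn i) - 1))"
proof -
  have "nn i \<ge> 1" using two[OF i] unfolding nn_def by simp
  then show ?thesis unfolding intraS_def by (cases "ty i") (auto simp: of_nat_diff)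
qed

lemma leaf_val:
  assumes i: "i \<in> {1..k}" and t: "ty i \<noteq> PSC" and a: "a \<ge> 0"
  shows "real (intraS ty i) + 2 * a * real (rr ty i) = 2 * (real (nn i) - 1) + 2 * a +
     (if ty i = PC then (real (nn i) - 1) * (real (nn i) - 2 + 2 * a) else 0)"
proof (cases "ty i")
  case PC
  then show ?thesis using intraS_real[OF i] unfolding rr_def by (simp add: algebra_simps)
next
  case PSC
  then show ?thesis using t by simp
next
  case PSS
  then show ?thesis using intraS_real[OF i] unfolding rr_def by simp
qed

lemma leaf_extra_nonneg:
  assumes i: "i \<in> {1..k}" and a: "a \<ge> 0"
  shows "(if ty i = PC then (real (nn i) - 1) * (real (nn i) - 2 + 2 * a) else 0) \<ge> 0"
  using nn2[OF i] a by auto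

lemma star_formula:
  assumes c: "valid c" and j: "j \<in> {1..k}" and tj: "ty j \<noteq> PSS"
    and noSC: "\<forall>i\<in>{1..k}. i \<noteq> j \<longrightarrow> ty i \<noteq> PSC"
  shows "real (card (gr V (adjS (StarToward j) ty c))) = real (intraS ty j) / 2 + M3 j +
     (\<Sum>i\<in>{1..k}-{j}. (if ty i = PC then (real (nn i) - 1) * (real (nn i) - 2 + 2 * real (nn j)) else 0)) / 2"
proof -
  let ?e = "\<lambda>i. (if ty i = PC then (real (nn i) - 1) * (real (nn i) - 2 + 2 * real (nn j)) else 0)"
  have "(\<Sum>i\<in>{1..k}-{j}. real (intraS ty i) + 2 * real (nn j) * real (rr ty i)) =
        (\<Sum>i\<in>{1..k}-{j}. 2 * (real (nn i) - 1) + 2 * real (nn j) + ?e i)"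
    by (rule sum.cong) (use leaf_val noSC in auto)
  also have "\<dots> = 2 * (\<Sum>i\<in>{1..k}-{j}. real (nn i) - 1) + 2 * real (nn j) * real (card ({1..k}-{j})) + (\<Sum>i\<in>{1..k}-{j}. ?e i)"
    by (simp add: sum.distrib sum_distrib_left)
  also have "real (card ({1..k}-{j})) = real k - 1" using j by (simp add: of_nat_diff)
  also have "(\<Sum>i\<in>{1..k}-{j}. real (nn i) - 1) = Sm - (real (nn j) - 1)" by (rule Sm_remove[OF j])
  finally have "(\<Sum>i\<in>{1..k}-{j}. real (intraS ty i) + 2 * real (nn j) * real (rr ty i)) =
    2 * (Sm - (real (nn j) - 1)) + 2 * real (nn j) * (real k - 1) + (\<Sum>i\<in>{1..k}-{j}. ?e i)" .
  then show ?thesis using star_count[where ty=ty, OF c j tj] unfolding M3_def by (simp add: algebra_simps)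
qed

lemma star_extra_ge:
  assumes j: "j \<in> {1..k}" and l: "l \<in> {1..k}" "l \<noteq> j"
  shows "(\<Sum>i\<in>{1..k}-{j}. (if ty i = PC then (real (nn i) - 1) * (real (nn i) - 2 + 2 * real (nn j)) else 0))
     \<ge> (if ty l = PC then (real (nn l) - 1) * (real (nn l) - 2 + 2 * real (nn j)) else 0)"
proof -
  let ?e = "\<lambda>i. (if ty i = PC then (real (nn i) - 1) * (real (nn i) - 2 + 2 * real (nn j)) else 0)"
  have nj: "real (nn j) \<ge> 0" by simp
  have "(\<Sum>i\<in>{1..k}-{j}. ?e i) = ?e l + (\<Sum>i\<in>{1..k}-{j}-{l}. ?e i)"
    by (rule sum.remove) (use l in auto)
  moreover have "(\<Sum>i\<in>{1..k}-{j}-{l}. ?e i) \<ge> 0"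
    by (rule sum_nonneg) (use leaf_extra_nonneg[OF _ nj] in auto)
  ultimately show ?thesis by simp
qed

lemma star_extra_nonneg:
  assumes j: "j \<in> {1..k}"
  shows "(\<Sum>i\<in>{1..k}-{j}. (if ty i = PC then (real (nn i) - 1) * (real (nn i) - 2 + 2 * real (nn j)) else 0)) \<ge> 0"
  by (rule sum_nonneg) (use leaf_extra_nonneg[of _ "real (nn j)"] in auto)

lemma star_extra_zero:
  assumes "\<forall>i\<in>{1..k}. i \<noteq> j \<longrightarrow> ty i = PSS"
  shows "(\<Sum>i\<in>{1..k}-{j}. (if ty i = PC then (real (nn i) - 1) * (real (nn i) - 2 + 2 * real (nn j)) else 0)) = 0"
  using assms by (intro sum.neutral) auto

lemma hsum_complete: "real (hsum Complete ty i) = (\<Sum>l\<in>{1..k}-{i}. real (rr ty l))"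
  unfolding hsum_def by simp

lemma complete_lb:
  assumes c: "valid c" and noPC: "\<forall>i\<in>{1..k}. ty i \<noteq> PC"
  shows "2 * real (card (gr V (adjS Complete ty c))) \<ge> 2 * Sm + real k * (real k - 1) +
     (\<Sum>i\<in>{1..k}. if ty i = PSC then 2 * (real k - 2) * (real (nn i) - 1) else 0)"
proof -
  define A where "A = {1..k::nat}"
  define r where "r i = real (rr ty i)" for i
  define R where "R = (\<Sum>i\<in>A. r i)"
  have fA: "finite A" unfolding A_def by simp
  have cA: "real (card A) = real k" unfolding A_def by simp
  have r1: "i \<in> A \<Longrightarrow> r i \<ge> 1" for i unfolding r_def A_def using rr1 by blast
  have HR: "i \<in> A \<Longrightarrow> (\<Sum>l\<in>A-{i}. r l) = R - r i" for i
    unfolding R_def using sum.remove[OF fA, of i r] by simp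
  have cAi: "real (card (A - {i})) = real k - 1" if i: "i \<in> A" for i
  proof -
    have k1: "k \<ge> 1" using i unfolding A_def by simp
    have "card (A - {i}) = k - 1" using i fA unfolding A_def by simp
    then show ?thesis using k1 by (simp add: of_nat_diff)
  qed
  have trm: "r i * (\<Sum>l\<in>A-{i}. r l) \<ge> (real k - 2) * r i + R - (real k - 1)" if i: "i \<in> A" for i
  proof -
    have "r i * (\<Sum>l\<in>A-{i}. r l) = (\<Sum>l\<in>A-{i}. r i * r l)" by (simp add: sum_distrib_left)
    also have "\<dots> \<ge> (\<Sum>l\<in>A-{i}. r i + r l - 1)"
    proof (rule sum_mono)
      fix l assume "l \<in> A - {i}"
      then have "(r i - 1) * (r l - 1) \<ge> 0" using r1 i by simp
      then show "r i + r l - 1 \<le> r i * r l" by (simp add: algebra_simps)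
    qed
    also have "(\<Sum>l\<in>A-{i}. r i + r l - 1) = real (card (A-{i})) * r i + (\<Sum>l\<in>A-{i}. r l) - real (card (A-{i}))"
      by (simp add: sum.distrib sum_subtractf)
    also have "\<dots> = (real k - 1) * r i + (R - r i) - (real k - 1)"
      unfolding HR[OF i] cAi[OF i] ..
    finally show ?thesis by (simp add: algebra_simps)
  qed
  have "2 * real (card (gr V (adjS Complete ty c))) = (\<Sum>i\<in>A. real (intraS ty i) + r i * (\<Sum>l\<in>A-{i}. r l))"
    using count_real[OF c, of Complete ty] unfolding A_def r_def hsum_complete .
  also have "\<dots> \<ge> (\<Sum>i\<in>A. real (intraS ty i) + ((real k - 2) * r i + R - (real k - 1)))"
    by (rule sum_mono) (use trm in auto)
  also have "(\<Sum>i\<in>A. real (intraS ty i) + ((real k - 2) * r i + R - (real k - 1))) =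
      (\<Sum>i\<in>A. real (intraS ty i) + (2 * real k - 2) * r i) - real k * (real k - 1)"
  proof -
    have e1: "(\<Sum>i\<in>A. real (intraS ty i) + ((real k - 2) * r i + R - (real k - 1))) =
       (\<Sum>i\<in>A. real (intraS ty i) + (real k - 2) * r i) + (\<Sum>i\<in>A. R - (real k - 1))"
      by (subst sum.distrib[symmetric]) (simp add: algebra_simps)
    have e2: "(\<Sum>i\<in>A. real (intraS ty i) + (real k - 2) * r i) = (\<Sum>i\<in>A. real (intraS ty i)) + (real k - 2) * R"
      by (simp add: sum.distrib sum_distrib_left R_def)
    have e3: "(\<Sum>i\<in>A. R - (real k - 1)) = real k * (R - (real k - 1))" using cA by simp
    have "(\<Sum>i\<in>A. real (intraS ty i) + ((real k - 2) * r i + R - (real k - 1))) =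
       (\<Sum>i\<in>A. real (intraS ty i)) + (real k - 2) * R + real k * R - real k * (real k - 1)"
      unfolding e1 e2 e3 by (simp add: algebra_simps)
    moreover have "(\<Sum>i\<in>A. real (intraS ty i) + (2 * real k - 2) * r i) = (\<Sum>i\<in>A. real (intraS ty i)) + (2 * real k - 2) * R"
      by (simp add: sum.distrib sum_distrib_left R_def)
    ultimately show ?thesis by (simp add: algebra_simps)
  qed
  also have "(\<Sum>i\<in>A. real (intraS ty i) + (2 * real k - 2) * r i) =
      (\<Sum>i\<in>A. 2 * (real (nn i) - 1) + 2 * (real k - 1) + (if ty i = PSC then 2 * (real k - 2) * (real (nn i) - 1) else 0))"
  proof (rule sum.cong)
    fix i assume i: "i \<in> A"
    then have i': "i \<in> {1..k}" unfolding A_def .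
    show "real (intraS ty i) + (2 * real k - 2) * r i =
      2 * (real (nn i) - 1) + 2 * (real k - 1) + (if ty i = PSC then 2 * (real k - 2) * (real (nn i) - 1) else 0)"
    proof (cases "ty i")
      case PC then show ?thesis using noPC i' by simp
    next
      case PSC then show ?thesis using intraS_real[OF i'] unfolding r_def rr_def by (simp add: algebra_simps)
    next
      case PSS then show ?thesis using intraS_real[OF i'] unfolding r_def rr_def by (simp add: algebra_simps)
    qed
  qed simp
  also have "\<dots> = 2 * Sm + 2 * real k * (real k - 1) + (\<Sum>i\<in>A. if ty i = PSC then 2 * (real k - 2) * (real (nn i) - 1) else 0)"
  proof -
    have "(\<Sum>i\<in>A. 2 * (real (nn i) - 1) + 2 * (real k - 1) + (if ty i = PSC then 2 * (real k - 2) * (real (nn i) - 1) else 0))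
      = (\<Sum>i\<in>A. 2 * (real (nn i) - 1)) + (\<Sum>i\<in>A. 2 * (real k - 1)) + (\<Sum>i\<in>A. if ty i = PSC then 2 * (real k - 2) * (real (nn i) - 1) else 0)"
      by (simp only: sum.distrib)
    moreover have "(\<Sum>i\<in>A. 2 * (real (nn i) - 1)) = 2 * Sm" unfolding Sm_def A_def by (rule sum_distrib_left[symmetric])
    moreover have "(\<Sum>i\<in>A. 2 * (real k - 1)) = 2 * real k * (real k - 1)" using cA by simp
    ultimately show ?thesis by simp
  qed
  finally show ?thesis unfolding A_def by (simp add: algebra_simps)
qed

lemma complete_exact:
  assumes c: "valid c" and allS: "\<forall>i\<in>{1..k}. ty i = PSS"
  shows "2 * real (card (gr V (adjS Complete ty c))) = 2 * Sm + real k * (real k - 1)"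
proof -
  have "2 * real (card (gr V (adjS Complete ty c))) = (\<Sum>i\<in>{1..k}. real (intraS ty i) + real (rr ty i) * real (hsum Complete ty i))"
    by (rule count_real[OF c])
  also have "\<dots> = (\<Sum>i\<in>{1..k}. 2 * (real (nn i) - 1) + (real k - 1))"
  proof (rule sum.cong)
    fix i assume i: "i \<in> {1..k}"
    have "real (hsum Complete ty i) = (\<Sum>l\<in>{1..k}-{i}. 1)" unfolding hsum_complete
      by (rule sum.cong) (use allS in \<open>auto simp: rr_def\<close>)
    also have "\<dots> = real k - 1" using i by (simp add: of_nat_diff)
    finally show "real (intraS ty i) + real (rr ty i) * real (hsum Complete ty i) = 2 * (real (nn i) - 1) + (real k - 1)"
      using intraS_real[OF i] allS i unfolding rr_def by simp
  qed simp
  also have "\<dots> = (\<Sum>i\<in>{1..k}. 2 * (real (nn i) - 1)) + (\<Sum>i\<in>{1..k}. (real k - 1))"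
    by (rule sum.distrib)
  also have "(\<Sum>i\<in>{1..k}. 2 * (real (nn i) - 1)) = 2 * Sm"
    unfolding Sm_def by (rule sum_distrib_left[symmetric])
  also have "(\<Sum>i\<in>{1..k}. (real k - 1)) = real k * (real k - 1)"
    by simp
  finally show ?thesis .
qed

end

context mp begin

definition extra :: "(nat \<Rightarrow> part_type) \<Rightarrow> nat \<Rightarrow> real" where
  "extra ty j = (\<Sum>i\<in>{1..k}-{j}. (if ty i = PC then (real (nn i) - 1) * (real (nn i) - 2 + 2 * real (nn j)) else 0))"

lemma star_hubPC:
  assumes c: "valid c" and j: "j \<in> {1..k}" and tj: "ty j = PC"
    and noSC: "\<forall>i\<in>{1..k}. i \<noteq> j \<longrightarrow> ty i \<noteq> PSC"
  shows "real (card (gr V (adjS (StarToward j) ty c))) = M2 j + extra ty j / 2"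
proof -
  have "real (intraS ty j) = real (nn j) * (real (nn j) - 1)" using intraS_real[OF j] tj by simp
  then show ?thesis using star_formula[OF c j _ noSC] tj unfolding M2_def extra_def by simp
qed

lemma star_hubSC:
  assumes c: "valid c" and j: "j \<in> {1..k}" and tj: "ty j = PSC"
    and noSC: "\<forall>i\<in>{1..k}. i \<noteq> j \<longrightarrow> ty i \<noteq> PSC"
  shows "real (card (gr V (adjS (StarToward j) ty c))) = M3 j + extra ty j / 2"
proof -
  have "real (intraS ty j) = 0" using intraS_real[OF j] tj by simp
  then show ?thesis using star_formula[OF c j _ noSC] tj unfolding extra_def by simp
qed

lemma extra_nonneg: "j \<in> {1..k} \<Longrightarrow> extra ty j \<ge> 0"
  unfolding extra_def by (rule star_extra_nonneg)

lemma extra_zero: "\<forall>i\<in>{1..k}. i \<noteq> j \<longrightarrow> ty i = PSS \<Longrightarrow> extra ty j = 0"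
  unfolding extra_def by (rule star_extra_zero)

lemma extra_PC:
  assumes j: "j \<in> {1..k}" and l: "l \<in> {1..k}" "l \<noteq> j" "ty l = PC"
  shows "extra ty j \<ge> (real (nn l) - 1) * (real (nn l) - 2 + 2 * real (nn j))"
  using star_extra_ge[OF j l(1,2), of ty] l(3) unfolding extra_def by simp

lemma complete_bound:
  assumes c: "valid c" and noPC: "\<forall>i\<in>{1..k}. ty i \<noteq> PC" and k2: "k \<ge> 2"
  shows "real (card (gr V (adjS Complete ty c))) \<ge> M1"
    and "l \<in> {1..k} \<Longrightarrow> ty l = PSC \<Longrightarrow>
         real (card (gr V (adjS Complete ty c))) \<ge> M1 + (real k - 2) * (real (nn l) - 1)"
proof -
  let ?x = "\<lambda>i. if ty i = PSC then 2 * (real k - 2) * (real (nn i) - 1) else 0"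
  have lb: "2 * real (card (gr V (adjS Complete ty c))) \<ge> 2 * Sm + real k * (real k - 1) + (\<Sum>i\<in>{1..k}. ?x i)"
    by (rule complete_lb[OF c noPC])
  have x0: "?x i \<ge> 0" if "i \<in> {1..k}" for i
    using nn2[OF that] k2 by simp
  have s0: "(\<Sum>i\<in>{1..k}. ?x i) \<ge> 0" by (rule sum_nonneg) (use x0 in auto)
  show "real (card (gr V (adjS Complete ty c))) \<ge> M1" using lb s0 unfolding M1_def by simp
  assume l: "l \<in> {1..k}" "ty l = PSC"
  have "(\<Sum>i\<in>{1..k}. ?x i) = ?x l + (\<Sum>i\<in>{1..k}-{l}. ?x i)" by (rule sum.remove) (use l in auto)
  moreover have "(\<Sum>i\<in>{1..k}-{l}. ?x i) \<ge> 0" by (rule sum_nonneg) (use x0 in auto)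
  moreover have "?x l = 2 * ((real k - 2) * (real (nn l) - 1))" using l by simp
  ultimately have s1: "(\<Sum>i\<in>{1..k}. ?x i) \<ge> 2 * ((real k - 2) * (real (nn l) - 1))" by linarith
  define X where "X = (real k - 2) * (real (nn l) - 1)"
  define S where "S = (\<Sum>i\<in>{1..k}. ?x i)"
  have "S \<ge> 2 * X" using s1 unfolding X_def S_def .
  moreover have "2 * real (card (gr V (adjS Complete ty c))) \<ge> 2 * Sm + real k * (real k - 1) + S"
    using lb unfolding S_def .
  ultimately have "real (card (gr V (adjS Complete ty c))) \<ge> Sm + real k * (real k - 1) / 2 + X" by linarith
  then show "real (card (gr V (adjS Complete ty c))) \<ge> M1 + (real k - 2) * (real (nn l) - 1)"
    unfolding M1_def X_def .
qed

lemma inF_cases: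
  assumes "inF E"
  obtains (Comp) ty c where "valid c" "\<forall>i\<in>{1..k}. ty i \<noteq> PC" "even (card {i\<in>{1..k}. ty i = PSS})"
      "E = gr V (adjS Complete ty c)"
  | (SPC) j ty c where "valid c" "j \<in> {1..k}" "ty j = PC" "\<forall>i\<in>{1..k}. i \<noteq> j \<longrightarrow> ty i \<noteq> PSC"
      "odd (card {i\<in>{1..k}. i \<noteq> j \<and> ty i = PSS})" "E = gr V (adjS (StarToward j) ty c)"
  | (SSC) j ty c where "valid c" "j \<in> {1..k}" "ty j = PSC" "\<forall>i\<in>{1..k}. i \<noteq> j \<longrightarrow> ty i \<noteq> PSC"
      "even (card {i\<in>{1..k}. i \<noteq> j \<and> ty i = PSS})" "E = gr V (adjS (StarToward j) ty c)"
proof -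
  obtain ct ty c where c: "valid c" and sh: "shape_ok ct ty" and E: "E = gr V (adjS ct ty c)"
    using assms unfolding inF_def by blast
  show ?thesis
  proof (cases ct)
    case Complete
    then show ?thesis using Comp c sh E unfolding shape_ok_def by auto
  next
    case (StarToward j)
    have j: "j \<in> {1..k}" "ty j \<noteq> PSS" "\<forall>i\<in>{1..k}. i \<noteq> j \<longrightarrow> ty i \<noteq> PSC"
      "ty j = PC \<longleftrightarrow> odd (card {i\<in>{1..k}. i \<noteq> j \<and> ty i = PSS})"
      using sh unfolding StarToward shape_ok_def central_type.case by blast+
    consider "ty j = PC" | "ty j = PSC" using j(2) pt3 by blast
    then show ?thesis
    proof cases
      case 1 then show ?thesis using SPC[OF c j(1) 1 j(3)] j(4) E StarToward by blast
    next
      case 2 then show ?thesis using SSC[OF c j(1) 2 j(3)] j(4) E StarToward by auto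
    qed
  qed
qed

lemma M3_eq: "j \<in> {1..k} \<Longrightarrow> M3 j = real (nn j) * (real k - 1) + (\<Sum>i\<in>{1..k}-{j}. real (nn i) - 1)"
  unfolding M3_def using Sm_remove by (simp add: algebra_simps)

lemma M3_mono: "real (nn a) \<le> real (nn b) \<Longrightarrow> k \<ge> 2 \<Longrightarrow> M3 a \<le> M3 b"
  unfolding M3_def by (simp add: mult_left_mono)

lemma M3_strict: "real (nn a) < real (nn b) \<Longrightarrow> k \<ge> 3 \<Longrightarrow> M3 a < M3 b"
  unfolding M3_def by (simp add: mult_strict_left_mono)

lemma M2_mono: "real (nn a) \<le> real (nn b) \<Longrightarrow> k \<ge> 2 \<Longrightarrow> a \<in> {1..k} \<Longrightarrow> M2 a \<le> M2 b"
proof -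
  assume ab: "real (nn a) \<le> real (nn b)" and k: "k \<ge> 2" and a: "a \<in> {1..k}"
  have "real (nn a) * (real (nn a) - 1) \<le> real (nn b) * (real (nn b) - 1)"
    using ab nn2[OF a] by (intro mult_mono) auto
  then show ?thesis using M3_mono[OF ab k] unfolding M2_def by simp
qed

lemma M2_strict: "real (nn a) < real (nn b) \<Longrightarrow> k \<ge> 3 \<Longrightarrow> a \<in> {1..k} \<Longrightarrow> M2 a < M2 b"
proof -
  assume ab: "real (nn a) < real (nn b)" and k: "k \<ge> 3" and a: "a \<in> {1..k}"
  have "real (nn a) * (real (nn a) - 1) \<le> real (nn b) * (real (nn b) - 1)"
    using ab nn2[OF a] by (intro mult_mono) auto
  then show ?thesis using M3_strict[OF ab k] unfolding M2_def by simp
qed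

lemma key_ineq:
  fixes a b kk :: real
  assumes a: "a \<ge> 2" and b: "b \<ge> 2" and kk: "kk \<ge> 2"
  shows "(b - 1) * (b - 2 + 2 * a) / 2 > min (a * (a - 1) / 2) ((kk - 2) * (b - a) + b * (b - 1) / 2)"
proof (cases "a \<ge> b")
  case True
  have p: "(b - 1) * (a - 1) \<ge> 1 * 1" by (rule mult_mono) (use a b in auto)
  have q: "(kk - 2) * (b - a) \<le> 0" using True kk by (simp add: mult_nonneg_nonpos)
  have e: "(b - 1) * (b - 2 + 2 * a) / 2 = ((kk - 2) * (b - a) + b * (b - 1) / 2) + ((b - 1) * (a - 1) - (kk - 2) * (b - a))"
    by (simp add: field_simps)
  have "(b - 1) * (b - 2 + 2 * a) / 2 > (kk - 2) * (b - a) + b * (b - 1) / 2"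
    using p q unfolding e by simp
  moreover have "min (a * (a - 1) / 2) ((kk - 2) * (b - a) + b * (b - 1) / 2) \<le> (kk - 2) * (b - a) + b * (b - 1) / 2"
    by (rule min.cobounded2)
  ultimately show ?thesis by linarith
next
  case False
  have p: "(b - 1) * (b - 2 + 2 * a) \<ge> (a - 1) * (b - 2 + 2 * a)" using False a b by (intro mult_right_mono) auto
  have q: "(a - 1) * a < (a - 1) * (b - 2 + 2 * a)" using False a b by (intro mult_strict_left_mono) auto
  have "(b - 1) * (b - 2 + 2 * a) / 2 > a * (a - 1) / 2" using p q by (simp add: mult.commute)
  moreover have "min (a * (a - 1) / 2) ((kk - 2) * (b - a) + b * (b - 1) / 2) \<le> a * (a - 1) / 2"
    by (rule min.cobounded1)
  ultimately show ?thesis by linarith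
qed

lemma SSC_PC_bound:
  assumes c: "valid c" and j: "j \<in> {1..k}" and tj: "ty j = PSC"
    and noSC: "\<forall>i\<in>{1..k}. i \<noteq> j \<longrightarrow> ty i \<noteq> PSC"
    and l: "l \<in> {1..k}" "l \<noteq> j" "ty l = PC" and k3: "k \<ge> 3"
  shows "real (card (gr V (adjS (StarToward j) ty c))) > min (M2 j) (M2 l)"
proof -
  let ?a = "real (nn j)" and ?b = "real (nn l)"
  have C: "real (card (gr V (adjS (StarToward j) ty c))) \<ge> M3 j + (?b - 1) * (?b - 2 + 2 * ?a) / 2"
    using star_hubSC[OF c j tj noSC] extra_PC[where ty=ty, OF j l] by simp
  have K: "(?b - 1) * (?b - 2 + 2 * ?a) / 2 > min (?a * (?a - 1) / 2) ((real k - 2) * (?b - ?a) + ?b * (?b - 1) / 2)"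
    by (rule key_ineq) (use nn2[OF j] nn2[OF l(1)] k3 in auto)
  have e1: "M2 j = M3 j + ?a * (?a - 1) / 2" unfolding M2_def by simp
  have e2: "M2 l = M3 j + ((real k - 2) * (?b - ?a) + ?b * (?b - 1) / 2)" unfolding M2_def M3_def by (simp add: algebra_simps)
  have "min (M2 j) (M2 l) = M3 j + min (?a * (?a - 1) / 2) ((real k - 2) * (?b - ?a) + ?b * (?b - 1) / 2)"
    unfolding e1 e2 by (simp add: min_add_distrib_left)
  then show ?thesis using C K by simp
qed

abbreviation "orb \<equiv> lc_orbit V (complete_multipartite k U)"

lemma min_facts:
  assumes "k \<ge> 1"
  shows "\<exists>j0\<in>{1..k}. nn j0 = Min (nn ` {1..k})" "\<forall>i\<in>{1..k}. Min (nn ` {1..k}) \<le> nn i"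
proof -
  have ne: "nn ` {1..k} \<noteq> {}" using assms by auto
  show "\<exists>j0\<in>{1..k}. nn j0 = Min (nn ` {1..k})" using Min_in[OF _ ne] by force
  show "\<forall>i\<in>{1..k}. Min (nn ` {1..k}) \<le> nn i" by simp
qed

lemma G3_card: "valid c \<Longrightarrow> j \<in> {1..k} \<Longrightarrow>
    real (card (gr V (adjS (StarToward j) (\<lambda>i. if i = j then PSC else PSS) c))) = M3 j"
  using star_hubSC[of c j "\<lambda>i. if i = j then PSC else PSS"] extra_zero[of j "\<lambda>i. if i = j then PSC else PSS"]
  by simp

lemma G2_card: "valid c \<Longrightarrow> j \<in> {1..k} \<Longrightarrow>
    real (card (gr V (adjS (StarToward j) (\<lambda>i. if i = j then PC else PSS) c))) = M2 j"
  using star_hubPC[of c j "\<lambda>i. if i = j then PC else PSS"] extra_zero[of j "\<lambda>i. if i = j then PC else PSS"]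
  by simp

lemma G1_card: "valid c \<Longrightarrow> real (card (gr V (adjS Complete (\<lambda>i. PSS) c))) = M1"
  using complete_exact[of c "\<lambda>i. PSS"] unfolding M1_def by simp

lemma M2_gt_M3: "j \<in> {1..k} \<Longrightarrow> M2 j \<ge> M3 j + 1"
proof -
  assume j: "j \<in> {1..k}"
  have "real (nn j) * (real (nn j) - 1) \<ge> 2 * 1" using nn2[OF j] by (intro mult_mono) auto
  then show ?thesis unfolding M2_def by simp
qed

lemma odd_case:
  assumes k3: "k \<ge> 3" and ko: "odd k" and G: "G \<in> orb" and mn: "\<forall>H\<in>orb. card G \<le> card H"
  shows "\<exists>j\<in>{1..k}. nn j = Min (nn ` {1..k}) \<and>
      (\<exists>c. valid c \<and> G = gr V (adjS (StarToward j) (\<lambda>i. if i = j then PSC else PSS) c)) \<and>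
      real (card G) = M3 j"
proof -
  define m where "m = Min (nn ` {1..k})"
  obtain j0 where j0: "j0 \<in> {1..k}" "nn j0 = m" using min_facts k3 unfolding m_def by auto
  have mle: "\<forall>i\<in>{1..k}. m \<le> nn i" using min_facts k3 unfolding m_def by auto
  obtain c0 where c0: "valid c0" using exists_valid by blast
  have ev: "even (k - 1) = True" using ko k3 by simp
  have R: "gr V (adjS (StarToward j0) (\<lambda>i. if i = j0 then PSC else PSS) c0) \<in> orb"
    using reach_full[OF c0 j0(1)] by (simp only: ev if_True)
  have ub: "real (card G) \<le> M3 j0"
    using mn R G3_card[OF c0 j0(1)] by (metis of_nat_le_iff)
  have M3min: "\<And>i. i \<in> {1..k} \<Longrightarrow> M3 j0 \<le> M3 i" using M3_mono mle j0 k3 by simp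
  have M2min: "\<And>i. i \<in> {1..k} \<Longrightarrow> M2 j0 \<le> M2 i" using M2_mono mle j0 k3 by simp
  have k2: "k \<ge> 2" using k3 by simp
  from orbit_F[OF G] show ?thesis
  proof (cases rule: inF_cases)
    case (Comp ty c)
    have "\<exists>l\<in>{1..k}. ty l \<noteq> PSS"
    proof (rule ccontr)
      assume "\<not> ?thesis"
      then have "{i\<in>{1..k}. ty i = PSS} = {1..k}" by auto
      then show False using Comp(3) ko by simp
    qed
    then obtain l where l: "l \<in> {1..k}" "ty l = PSC" using Comp(2) pt3 by blast
    have "real (card G) \<ge> M1 + (real k - 2) * (real (nn l) - 1)"
      using complete_bound(2)[OF Comp(1,2) k2 l] Comp(4) by simp
    moreover have "M1 + (real k - 2) * (real (nn l) - 1) - M3 l = (real k - 1) * (real k - 2) / 2"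
      unfolding M1_def M3_def by (simp add: field_simps)
    moreover have "(real k - 1) * (real k - 2) / 2 > 0" using k3 by simp
    ultimately show ?thesis using M3min[OF l(1)] ub by linarith
  next
    case (SPC j ty c)
    have "real (card G) \<ge> M2 j" using star_hubPC[OF SPC(1-4)] extra_nonneg[OF SPC(2), of ty] SPC(6) by simp
    then show ?thesis using M2_gt_M3[OF SPC(2)] M3min[OF SPC(2)] ub by linarith
  next
    case (SSC j ty c)
    show ?thesis
    proof (cases "\<exists>l\<in>{1..k}. l \<noteq> j \<and> ty l = PC")
      case True
      then obtain l where l: "l \<in> {1..k}" "l \<noteq> j" "ty l = PC" by blast
      have "real (card G) > min (M2 j) (M2 l)" using SSC_PC_bound[OF SSC(1-4) l k3] SSC(6) by simp
      moreover have "min (M2 j) (M2 l) \<ge> M2 j0" using M2min[OF SSC(2)] M2min[OF l(1)] by simp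
      ultimately show ?thesis using M2_gt_M3[OF j0(1)] ub by linarith
    next
      case False
      then have allS: "\<forall>i\<in>{1..k}. i \<noteq> j \<longrightarrow> ty i = PSS" using SSC(4) pt3 by blast
      have cG: "real (card G) = M3 j" using star_hubSC[OF SSC(1-4)] extra_zero[OF allS] SSC(6) by simp
      have "nn j = m"
      proof (rule ccontr)
        assume "nn j \<noteq> m"
        then have "real (nn j0) < real (nn j)" using mle SSC(2) j0 by fastforce
        then have "M3 j0 < M3 j" using M3_strict k3 by blast
        then show False using cG ub by simp
      qed
      moreover have "G = gr V (adjS (StarToward j) (\<lambda>i. if i = j then PSC else PSS) c)"
        unfolding SSC(6) by (rule adjS_ty_cong) (use allS SSC(3) in auto)
      ultimately show ?thesis using SSC(1,2) cG unfolding m_def by blast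
    qed
  qed
qed

lemma even_classify:
  assumes k3: "k \<ge> 3" and ke: "even k" and F: "inF E"
    and j0: "j0 \<in> {1..k}" and mle: "\<forall>i\<in>{1..k}. nn j0 \<le> nn i"
  shows "(\<exists>c. valid c \<and> E = gr V (adjS Complete (\<lambda>i. PSS) c) \<and> real (card E) = M1)
      \<or> (\<exists>j\<in>{1..k}. \<exists>c. valid c \<and> E = gr V (adjS (StarToward j) (\<lambda>i. if i = j then PC else PSS) c)
            \<and> real (card E) = M2 j)
      \<or> real (card E) > min M1 (M2 j0)"
proof -
  have k2: "k \<ge> 2" using k3 by simp
  have M2min: "\<And>i. i \<in> {1..k} \<Longrightarrow> M2 j0 \<le> M2 i" using M2_mono mle j0 k3 by simp
  from F show ?thesis
  proof (cases rule: inF_cases)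
    case (Comp ty c)
    show ?thesis
    proof (cases "\<exists>l\<in>{1..k}. ty l = PSC")
      case True
      then obtain l where l: "l \<in> {1..k}" "ty l = PSC" by blast
      have "real (card E) \<ge> M1 + (real k - 2) * (real (nn l) - 1)"
        using complete_bound(2)[OF Comp(1,2) k2 l] Comp(4) by simp
      moreover have "(real k - 2) * (real (nn l) - 1) > 0" using k3 nn2[OF l(1)] by simp
      ultimately show ?thesis by linarith
    next
      case False
      then have allS: "\<forall>i\<in>{1..k}. ty i = PSS" using Comp(2) pt3 by blast
      have "E = gr V (adjS Complete (\<lambda>i. PSS) c)"
        unfolding Comp(4) by (rule adjS_ty_cong) (use allS in auto)
      then show ?thesis using G1_card[OF Comp(1)] Comp(1) by auto
    qed
  next
    case (SPC j ty c)
    show ?thesis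
    proof (cases "\<exists>l\<in>{1..k}. l \<noteq> j \<and> ty l = PC")
      case True
      then obtain l where l: "l \<in> {1..k}" "l \<noteq> j" "ty l = PC" by blast
      have "extra ty j \<ge> (real (nn l) - 1) * (real (nn l) - 2 + 2 * real (nn j))"
        by (rule extra_PC[where ty=ty, OF SPC(2) l])
      moreover have "(real (nn l) - 1) * (real (nn l) - 2 + 2 * real (nn j)) > 0"
        using nn2[OF l(1)] nn2[OF SPC(2)] by simp
      moreover have "real (card E) = M2 j + extra ty j / 2" using star_hubPC[OF SPC(1-4)] SPC(6) by simp
      ultimately have "real (card E) > M2 j" by linarith
      then show ?thesis using M2min[OF SPC(2)] by linarith
    next
      case False
      then have allS: "\<forall>i\<in>{1..k}. i \<noteq> j \<longrightarrow> ty i = PSS" using SPC(4) pt3 by blast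
      have cE: "real (card E) = M2 j" using star_hubPC[OF SPC(1-4)] extra_zero[OF allS] SPC(6) by simp
      have "E = gr V (adjS (StarToward j) (\<lambda>i. if i = j then PC else PSS) c)"
        unfolding SPC(6) by (rule adjS_ty_cong) (use allS SPC(3) in auto)
      then show ?thesis using SPC(1,2) cE by blast
    qed
  next
    case (SSC j ty c)
    have "\<exists>l\<in>{1..k}. l \<noteq> j \<and> ty l = PC"
    proof (rule ccontr)
      assume "\<not> ?thesis"
      then have "{i\<in>{1..k}. i \<noteq> j \<and> ty i = PSS} = {1..k} - {j}" using SSC(4) pt3 by blast
      moreover have "card ({1..k} - {j}) = k - 1" using SSC(2) by simp
      ultimately show False using SSC(5) ke k3 by simp
    qed
    then obtain l where l: "l \<in> {1..k}" "l \<noteq> j" "ty l = PC" by blast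
    have "real (card E) > min (M2 j) (M2 l)" using SSC_PC_bound[OF SSC(1-4) l k3] SSC(6) by simp
    moreover have "min (M2 j) (M2 l) \<ge> M2 j0" using M2min[OF SSC(2)] M2min[OF l(1)] by simp
    ultimately show ?thesis by linarith
  qed
qed

lemma f_eq: "f_val k (nn j) = M2 j - M1"
  unfolding f_val_def M2_def M3_def M1_def by (simp add: field_simps)

end

theorem theorem11:
  fixes k :: nat and U :: "nat \<Rightarrow> 'a set" and n :: "nat \<Rightarrow> nat"
    and V :: "'a set" and G :: "'a set set"
  assumes k3: "k \<ge> 3"
    and fin: "\<forall>i\<in>{1..k}. finite (U i)"
    and card_U: "\<forall>i\<in>{1..k}. card (U i) = n i"
    and n2: "\<forall>i\<in>{1..k}. n i \<ge> 2"
    and disj: "\<forall>i\<in>{1..k}. \<forall>l\<in>{1..k}. i \<noteq> l \<longrightarrow> U i \<inter> U l = {}"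
    and V_def: "V = (\<Union>i\<in>{1..k}. U i)"
    and G_orb: "G \<in> lc_orbit V (complete_multipartite k U)"
    and G_min: "\<forall>H\<in>lc_orbit V (complete_multipartite k U). card G \<le> card H"
  shows
    "(even k \<and> f_val k (Min (n ` {1..k})) > 0 \<longrightarrow>
        (\<exists>c. valid_centers k U c \<and> G = Gamma1 k U c) \<and>
        real (card G) = real k * (real k - 1) / 2 + (\<Sum>i=1..k. (real (n i) - 1)))
   \<and> (even k \<and> f_val k (Min (n ` {1..k})) < 0 \<longrightarrow>
        (\<exists>j\<in>{1..k}. n j = Min (n ` {1..k}) \<and>
           (\<exists>c. valid_centers k U c \<and> G = Gamma2 k U j c) \<and>
           real (card G) = real (n j) * (real k - 1) + real (n j) * (real (n j) - 1) / 2
                           + (\<Sum>i\<in>{1..k} - {j}. (real (n i) - 1))))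
   \<and> (even k \<and> f_val k (Min (n ` {1..k})) = 0 \<longrightarrow>
        (\<forall>j\<in>{1..k}. \<forall>c. n j = Min (n ` {1..k}) \<and> valid_centers k U c \<longrightarrow>
           card (Gamma1 k U c) = card (Gamma2 k U j c) \<and>
           Gamma1 k U c \<in> lc_orbit V (complete_multipartite k U) \<and>
           Gamma2 k U j c \<in> lc_orbit V (complete_multipartite k U) \<and>
           card (Gamma1 k U c) = card G))
   \<and> (odd k \<longrightarrow>
        (\<exists>j\<in>{1..k}. n j = Min (n ` {1..k}) \<and>
           (\<exists>c. valid_centers k U c \<and> G = Gamma3 k U j c) \<and>
           real (card G) = real (n j) * (real k - 1) + (\<Sum>i\<in>{1..k} - {j}. (real (n i) - 1))))"
proof -
  interpret mp k U V
  proof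
    show "\<And>i. i \<in> {1..k} \<Longrightarrow> finite (U i)" using fin by blast
    show "\<And>i. i \<in> {1..k} \<Longrightarrow> 2 \<le> card (U i)" using card_U n2 by simp
    show "\<And>i l. i \<in> {1..k} \<Longrightarrow> l \<in> {1..k} \<Longrightarrow> i \<noteq> l \<Longrightarrow> U i \<inter> U l = {}" using disj by blast
    show "V = (\<Union>i\<in>{1..k}. U i)" by (rule V_def)
  qed
  have nn_n: "\<And>i. i \<in> {1..k} \<Longrightarrow> nn i = n i" using card_U unfolding nn_def by simp
  have Min_eq: "Min (n ` {1..k}) = Min (nn ` {1..k})"
    using nn_n by (metis image_cong)
  define m where "m = Min (nn ` {1..k})"
  have k1: "k \<ge> 1" using k3 by simp
  obtain j0 where j0: "j0 \<in> {1..k}" "nn j0 = m" using min_facts(1)[OF k1] unfolding m_def by blast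
  have mle: "\<forall>i\<in>{1..k}. nn j0 \<le> nn i" using min_facts(2)[OF k1] j0 unfolding m_def by simp
  obtain c0 where c0: "valid c0" using exists_valid by blast
  have vc: "\<And>c. valid_centers k U c = valid c" unfolding valid_centers_def valid_def by simp
  have Sm_n: "(\<Sum>i=1..k. (real (n i) - 1)) = Sm" unfolding Sm_def by (rule sum.cong) (use nn_n in auto)
  have Sm_nj: "\<And>j. j \<in> {1..k} \<Longrightarrow> (\<Sum>i\<in>{1..k} - {j}. (real (n i) - 1)) = (\<Sum>i\<in>{1..k} - {j}. (real (nn i) - 1))"
    by (rule sum.cong) (use nn_n in auto)
  have G1eq: "\<And>c. valid c \<Longrightarrow> Gamma1 k U c = gr V (adjS Complete (\<lambda>i. PSS) c)"
    unfolding Gamma1_def by (rule Gamma_eq) (auto simp: ctok_def)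
  have G2eq: "\<And>j c. valid c \<Longrightarrow> j \<in> {1..k} \<Longrightarrow> Gamma2 k U j c = gr V (adjS (StarToward j) (\<lambda>i. if i = j then PC else PSS) c)"
    unfolding Gamma2_def by (rule Gamma_eq) (auto simp: ctok_def)
  have G3eq: "\<And>j c. valid c \<Longrightarrow> j \<in> {1..k} \<Longrightarrow> Gamma3 k U j c = gr V (adjS (StarToward j) (\<lambda>i. if i = j then PSC else PSS) c)"
    unfolding Gamma3_def by (rule Gamma_eq) (auto simp: ctok_def)
  have M1_n: "M1 = real k * (real k - 1) / 2 + (\<Sum>i=1..k. (real (n i) - 1))"
    unfolding M1_def Sm_n by simp
  have M2_n: "\<And>j. j \<in> {1..k} \<Longrightarrow> M2 j = real (n j) * (real k - 1) + real (n j) * (real (n j) - 1) / 2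
                           + (\<Sum>i\<in>{1..k} - {j}. (real (n i) - 1))"
    unfolding M2_def using M3_eq Sm_nj nn_n by simp
  have M3_n: "\<And>j. j \<in> {1..k} \<Longrightarrow> M3 j = real (n j) * (real k - 1) + (\<Sum>i\<in>{1..k} - {j}. (real (n i) - 1))"
    using M3_eq Sm_nj nn_n by simp
  have fM: "f_val k (Min (n ` {1..k})) = M2 j0 - M1" using f_eq[of j0] j0 Min_eq unfolding m_def by simp
  have M2min: "\<And>i. i \<in> {1..k} \<Longrightarrow> M2 j0 \<le> M2 i" using M2_mono mle j0 k3 by simp
  have G1orb: "\<And>c. valid c \<Longrightarrow> even k \<Longrightarrow> gr V (adjS Complete (\<lambda>i. PSS) c) \<in> orb"
    using reach_G1 k1 by blast
  have G2orb: "\<And>j c. valid c \<Longrightarrow> j \<in> {1..k} \<Longrightarrow> even k \<Longrightarrow>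
      gr V (adjS (StarToward j) (\<lambda>i. if i = j then PC else PSS) c) \<in> orb"
  proof -
    fix j c assume c: "valid c" and j: "j \<in> {1..k}" and ke: "even k"
    have ev: "even (k - 1) = False" using ke k1 by simp
    show "gr V (adjS (StarToward j) (\<lambda>i. if i = j then PC else PSS) c) \<in> orb"
      using reach_full[OF c j] by (simp only: ev if_False)
  qed
  have cls: "\<And>E. even k \<Longrightarrow> inF E \<Longrightarrow> (\<exists>c. valid c \<and> E = gr V (adjS Complete (\<lambda>i. PSS) c) \<and> real (card E) = M1)
      \<or> (\<exists>j\<in>{1..k}. \<exists>c. valid c \<and> E = gr V (adjS (StarToward j) (\<lambda>i. if i = j then PC else PSS) c)
            \<and> real (card E) = M2 j)
      \<or> real (card E) > min M1 (M2 j0)"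
    using even_classify[OF k3 _ _ j0(1) mle] by blast
  have GF: "inF G" by (rule orbit_F[OF G_orb])
  have P0: "(even k \<and> 0 < f_val k (Min (n ` {1..k}))) \<longrightarrow> ((\<exists>c. valid_centers k U c \<and> G = Gamma1 k U c) \<and>
        real (card G) = real k * (real k - 1) / 2 + (\<Sum>i=1..k. (real (n i) - 1)))"
  proof
      assume h: "even k \<and> 0 < f_val k (Min (n ` {1..k}))"
      have lt: "M1 < M2 j0" using h fM by simp
      have ub: "real (card G) \<le> M1"
        using G_min G1orb[OF c0] h G1_card[OF c0] by (metis of_nat_le_iff)
      from cls[OF _ GF] h consider (a) c where "valid c" "G = gr V (adjS Complete (\<lambda>i. PSS) c)" "real (card G) = M1"
        | (b) j where "j \<in> {1..k}" "real (card G) = M2 j"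
        | (c) "real (card G) > min M1 (M2 j0)" by blast
      then show "(\<exists>c. valid_centers k U c \<and> G = Gamma1 k U c) \<and>
          real (card G) = real k * (real k - 1) / 2 + (\<Sum>i=1..k. (real (n i) - 1))"
      proof cases
        case a then show ?thesis using G1eq vc M1_n by metis
      next
        case b then show ?thesis using M2min[OF b(1)] lt ub by linarith
      next
        case c then show ?thesis using lt ub by linarith
      qed
  qed
  have P1: "(even k \<and> f_val k (Min (n ` {1..k})) < 0) \<longrightarrow> (\<exists>j\<in>{1..k}. n j = Min (n ` {1..k}) \<and>
           (\<exists>c. valid_centers k U c \<and> G = Gamma2 k U j c) \<and>
           real (card G) = real (n j) * (real k - 1) + real (n j) * (real (n j) - 1) / 2
                           + (\<Sum>i\<in>{1..k} - {j}. (real (n i) - 1)))"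
  proof
      assume h: "even k \<and> f_val k (Min (n ` {1..k})) < 0"
      have lt: "M2 j0 < M1" using h fM by simp
      have ub: "real (card G) \<le> M2 j0"
        using G_min G2orb[OF c0 j0(1)] h G2_card[OF c0 j0(1)] by (metis of_nat_le_iff)
      from cls[OF _ GF] h consider (a) "real (card G) = M1"
        | (b) j c where "j \<in> {1..k}" "valid c" "G = gr V (adjS (StarToward j) (\<lambda>i. if i = j then PC else PSS) c)" "real (card G) = M2 j"
        | (c) "real (card G) > min M1 (M2 j0)" by blast
      then show "\<exists>j\<in>{1..k}. n j = Min (n ` {1..k}) \<and>
             (\<exists>c. valid_centers k U c \<and> G = Gamma2 k U j c) \<and>
             real (card G) = real (n j) * (real k - 1) + real (n j) * (real (n j) - 1) / 2
                             + (\<Sum>i\<in>{1..k} - {j}. (real (n i) - 1))"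
      proof cases
        case a then show ?thesis using lt ub by linarith
      next
        case b
        have "nn j = nn j0"
        proof (rule ccontr)
          assume "nn j \<noteq> nn j0"
          then have "real (nn j0) < real (nn j)" using mle b(1) by fastforce
          then have "M2 j0 < M2 j" using M2_strict k3 j0(1) by blast
          then show False using b(4) ub by simp
        qed
        then have "n j = Min (n ` {1..k})" using nn_n[OF b(1)] j0 Min_eq unfolding m_def by simp
        then show ?thesis using b G2eq vc M2_n by metis
      next
        case c then show ?thesis using lt ub by linarith
      qed
  qed
  have P2: "(even k \<and> f_val k (Min (n ` {1..k})) = 0) \<longrightarrow> (\<forall>j\<in>{1..k}. \<forall>c. n j = Min (n ` {1..k}) \<and> valid_centers k U c \<longrightarrow>
           card (Gamma1 k U c) = card (Gamma2 k U j c) \<and>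
           Gamma1 k U c \<in> lc_orbit V (complete_multipartite k U) \<and>
           Gamma2 k U j c \<in> lc_orbit V (complete_multipartite k U) \<and>
           card (Gamma1 k U c) = card G)"
  proof
      assume h: "even k \<and> f_val k (Min (n ` {1..k})) = 0"
      have eq: "M2 j0 = M1" using h fM by simp
      show "\<forall>j\<in>{1..k}. \<forall>c. n j = Min (n ` {1..k}) \<and> valid_centers k U c \<longrightarrow>
             card (Gamma1 k U c) = card (Gamma2 k U j c) \<and>
             Gamma1 k U c \<in> lc_orbit V (complete_multipartite k U) \<and>
             Gamma2 k U j c \<in> lc_orbit V (complete_multipartite k U) \<and>
             card (Gamma1 k U c) = card G"
      proof (intro ballI allI impI)
        fix j c assume j: "j \<in> {1..k}" and hc: "n j = Min (n ` {1..k}) \<and> valid_centers k U c"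
        have c: "valid c" using hc vc by simp
        have nj: "nn j = nn j0" using hc nn_n[OF j] j0 Min_eq unfolding m_def by simp
        have M2j: "M2 j = M2 j0" unfolding M2_def M3_def nj ..
        have c1: "real (card (Gamma1 k U c)) = M1" using G1eq[OF c] G1_card[OF c] by simp
        have c2: "real (card (Gamma2 k U j c)) = M1" using G2eq[OF c j] G2_card[OF c j] M2j eq by simp
        have o1: "Gamma1 k U c \<in> orb" using G1eq[OF c] G1orb[OF c] h by simp
        have o2: "Gamma2 k U j c \<in> orb" using G2eq[OF c j] G2orb[OF c j] h by simp
        have ub: "card G \<le> card (Gamma1 k U c)" using G_min o1 by blast
        have lb: "real (card G) \<ge> M1"
        proof -
          from cls[OF _ GF] h consider (a) "real (card G) = M1"
            | (b) j' where "j' \<in> {1..k}" "real (card G) = M2 j'"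
            | (c) "real (card G) > min M1 (M2 j0)" by blast
          then show ?thesis
          proof cases
            case a then show ?thesis by simp
          next
            case b then show ?thesis using M2min[OF b(1)] eq by simp
          next
            case c then show ?thesis using eq by simp
          qed
        qed
        have "card (Gamma1 k U c) = card G" using ub lb c1 by linarith
        moreover have "card (Gamma1 k U c) = card (Gamma2 k U j c)" using c1 c2 by linarith
        ultimately show "card (Gamma1 k U c) = card (Gamma2 k U j c) \<and>
             Gamma1 k U c \<in> lc_orbit V (complete_multipartite k U) \<and>
             Gamma2 k U j c \<in> lc_orbit V (complete_multipartite k U) \<and>
             card (Gamma1 k U c) = card G" using o1 o2 by simp
      qed
  qed
  have P3: "(odd k) \<longrightarrow> (\<exists>j\<in>{1..k}. n j = Min (n ` {1..k}) \<and>
           (\<exists>c. valid_centers k U c \<and> G = Gamma3 k U j c) \<and>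
           real (card G) = real (n j) * (real k - 1) + (\<Sum>i\<in>{1..k} - {j}. (real (n i) - 1)))"
  proof
      assume ko: "odd k"
      obtain j c where j: "j \<in> {1..k}" "nn j = Min (nn ` {1..k})" and c: "valid c"
        and Gj: "G = gr V (adjS (StarToward j) (\<lambda>i. if i = j then PSC else PSS) c)" and cG: "real (card G) = M3 j"
        using odd_case[OF k3 ko G_orb G_min] by blast
      show "\<exists>j\<in>{1..k}. n j = Min (n ` {1..k}) \<and>
             (\<exists>c. valid_centers k U c \<and> G = Gamma3 k U j c) \<and>
             real (card G) = real (n j) * (real k - 1) + (\<Sum>i\<in>{1..k} - {j}. (real (n i) - 1))"
        using j c Gj cG G3eq[OF c j(1)] vc M3_n[OF j(1)] nn_n[OF j(1)] Min_eq by metis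

  qed
  show ?thesis using P0 P1 P2 P3 by blast
qed

end
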